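(* Every search game (as defined in the context) is weakly acyclic: for every pure strategy profile $s^{1}\in S$ there exists an improvement path $(s^{1},\ldots,s^{T})$ starting at $s^{1}$ such that $s^{T}$ is a pure (Bayesian) Nash equilibrium.
   Context: A search game $G=(N,\Omega,\Pi,\mu,K,c,v)$ consists of: a finite set of players $N=\{1,\ldots,n\}$; a finite set $\Omega$ of locations (the prize is hidden in exactly one location, the true state); for each player $i$ a partition $\Pi_i$ of $\Omega$ into cells, where $\pi_i(\omega)$ denotes the cell of $\Pi_i$ containing $\omega$ (player $i$ observes the cell containing the true location); a common prior $\mu\in\Delta(\Omega)$ with $\mu(\pi_i)>0$ for every cell $\pi_i\in\Pi_i$ and every $i$, where $\mu(E)=\sum_{\omega\in E}\mu(\omega)$; a capacity $K_i\in\mathbb{N}$ for each player; a cost function $c_i:\{0,\ldots,K_i\}\to\mathbb{R}_{\ge 0}$ with $c_i(0)=0$ and $c_i(k+1)-c_i(k)\ge c_i(k)-c_i(k-1)$ for $1\le k\le K_i-1$; rewards $v_i^m(\omega)\ge 0$ for each player $i$, location $\omega$, and $m\in\{1,\ldots,n\}$, with $v_i^{m+1}(\omega)\le v_i^m(\omega)$; and social values $v_{\mathfrak{s}}(\omega)\ge 0$. A pure strategy $s_i$ of player $i$ assigns to each cell $\pi_i\in\Pi_i$ a subset $s_i(\pi_i)\subseteq\pi_i$ with at most $K_i$ elements; $S_i$ is the set of these and $S=\prod_i S_i$. For a profile $s$ let $m_s(\omega)=\sum_{i\in N}\mathbf{1}_{\omega\in s_i(\pi_i(\omega))}$. Player $i$'s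 payoff given location $\omega$ is $u_i(s|\omega)=\mathbf{1}_{\omega\in s_i(\pi_i(\omega))}v_i^{m_s(\omega)}(\omega)-c_i(|s_i(\pi_i(\omega))|)$, and $u_i(s)=\sum_{\omega\in\Omega}\mu(\omega)u_i(s|\omega)$. A profile $s$ is a (pure Bayesian) Nash equilibrium if $u_i(s)\ge u_i(s_i',s_{-i})$ for all $i$ and all $s_i'\in S_i$. A sequence $(s^{1},\ldots,s^{T})$ of pure profiles is an improvement path if for every $t<T$ there is a player $i_t$ with $s^{t}_j=s^{t+1}_j$ for all $j\ne i_t$ and $u_{i_t}(s^{t+1})>u_{i_t}(s^{t})$. *)

theory Defs
  imports Complex_Main
begin

text \<open>Players are the elements of a finite type 'i (so N = UNIV, n = card (UNIV :: 'i set));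
locations are the elements of a finite type 'w (so Omega = UNIV).\<close>

definition is_partition :: "'w set \<Rightarrow> 'w set set \<Rightarrow> bool" where
  "is_partition \<Omega> P \<longleftrightarrow> (\<forall>C\<in>P. C \<noteq> {} \<and> C \<subseteq> \<Omega>) \<and> (\<forall>\<omega>\<in>\<Omega>. \<exists>!C. C \<in> P \<and> \<omega> \<in> C)"

definition cell :: "'w set set \<Rightarrow> 'w \<Rightarrow> 'w set" where
  "cell P \<omega> = (THE C. C \<in> P \<and> \<omega> \<in> C)"

definition search_game ::
  "('i::finite \<Rightarrow> 'w::finite set set) \<Rightarrow> ('w \<Rightarrow> real) \<Rightarrow> ('i \<Rightarrow> nat)
   \<Rightarrow> ('i \<Rightarrow> nat \<Rightarrow> real) \<Rightarrow> ('i \<Rightarrow> nat \<Rightarrow> 'w \<Rightarrow> real) \<Rightarrow> ('w \<Rightarrow> real) \<Rightarrow> bool" where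
  "search_game \<Pi> \<mu> K c v vs \<longleftrightarrow>
     (\<forall>i. is_partition UNIV (\<Pi> i)) \<and>
     (\<forall>\<omega>. \<mu> \<omega> \<ge> 0) \<and> (\<Sum>\<omega>\<in>UNIV. \<mu> \<omega>) = 1 \<and>
     (\<forall>i. \<forall>C\<in>\<Pi> i. (\<Sum>\<omega>\<in>C. \<mu> \<omega>) > 0) \<and>
     (\<forall>i. c i 0 = 0) \<and> (\<forall>i k. k \<le> K i \<longrightarrow> c i k \<ge> 0) \<and>
     (\<forall>i k. 1 \<le> k \<and> k + 1 \<le> K i \<longrightarrow> c i (k + 1) - c i k \<ge> c i k - c i (k - 1)) \<and>
     (\<forall>i \<omega> m. 1 \<le> m \<and> m \<le> card (UNIV :: 'i set) \<longrightarrow> v i m \<omega> \<ge> 0) \<and>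
     (\<forall>i \<omega> m. 1 \<le> m \<and> m + 1 \<le> card (UNIV :: 'i set) \<longrightarrow> v i (m + 1) \<omega> \<le> v i m \<omega>) \<and>
     (\<forall>\<omega>. vs \<omega> \<ge> 0)"

definition strategies :: "('i \<Rightarrow> 'w set set) \<Rightarrow> ('i \<Rightarrow> nat) \<Rightarrow> 'i \<Rightarrow> ('w set \<Rightarrow> 'w set) set" where
  "strategies \<Pi> K i = {\<sigma>. (\<forall>C\<in>\<Pi> i. \<sigma> C \<subseteq> C \<and> card (\<sigma> C) \<le> K i) \<and> (\<forall>C. C \<notin> \<Pi> i \<longrightarrow> \<sigma> C = {})}"

definition profiles :: "('i \<Rightarrow> 'w set set) \<Rightarrow> ('i \<Rightarrow> nat) \<Rightarrow> ('i \<Rightarrow> 'w set \<Rightarrow> 'w set) set" where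
  "profiles \<Pi> K = {s. \<forall>i. s i \<in> strategies \<Pi> K i}"

definition searchers :: "('i::finite \<Rightarrow> 'w set set) \<Rightarrow> ('i \<Rightarrow> 'w set \<Rightarrow> 'w set) \<Rightarrow> 'w \<Rightarrow> nat" where
  "searchers \<Pi> s \<omega> = card {i. \<omega> \<in> s i (cell (\<Pi> i) \<omega>)}"

definition payoff_at ::
  "('i::finite \<Rightarrow> 'w set set) \<Rightarrow> ('i \<Rightarrow> nat \<Rightarrow> real) \<Rightarrow> ('i \<Rightarrow> nat \<Rightarrow> 'w \<Rightarrow> real)
   \<Rightarrow> ('i \<Rightarrow> 'w set \<Rightarrow> 'w set) \<Rightarrow> 'i \<Rightarrow> 'w \<Rightarrow> real" where
  "payoff_at \<Pi> c v s i \<omega> =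
     (if \<omega> \<in> s i (cell (\<Pi> i) \<omega>) then v i (searchers \<Pi> s \<omega>) \<omega> else 0)
     - c i (card (s i (cell (\<Pi> i) \<omega>)))"

definition payoff ::
  "('i::finite \<Rightarrow> 'w::finite set set) \<Rightarrow> ('w \<Rightarrow> real) \<Rightarrow> ('i \<Rightarrow> nat \<Rightarrow> real) \<Rightarrow> ('i \<Rightarrow> nat \<Rightarrow> 'w \<Rightarrow> real)
   \<Rightarrow> ('i \<Rightarrow> 'w set \<Rightarrow> 'w set) \<Rightarrow> 'i \<Rightarrow> real" where
  "payoff \<Pi> \<mu> c v s i = (\<Sum>\<omega>\<in>UNIV. \<mu> \<omega> * payoff_at \<Pi> c v s i \<omega>)"

definition is_nash ::
  "('i::finite \<Rightarrow> 'w::finite set set) \<Rightarrow> ('w \<Rightarrow> real) \<Rightarrow> ('i \<Rightarrow> nat) \<Rightarrow> ('i \<Rightarrow> nat \<Rightarrow> real)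
   \<Rightarrow> ('i \<Rightarrow> nat \<Rightarrow> 'w \<Rightarrow> real) \<Rightarrow> ('i \<Rightarrow> 'w set \<Rightarrow> 'w set) \<Rightarrow> bool" where
  "is_nash \<Pi> \<mu> K c v s \<longleftrightarrow> s \<in> profiles \<Pi> K \<and>
     (\<forall>i. \<forall>\<sigma>\<in>strategies \<Pi> K i. payoff \<Pi> \<mu> c v s i \<ge> payoff \<Pi> \<mu> c v (s(i := \<sigma>)) i)"

definition improvement_path ::
  "('i::finite \<Rightarrow> 'w::finite set set) \<Rightarrow> ('w \<Rightarrow> real) \<Rightarrow> ('i \<Rightarrow> nat) \<Rightarrow> ('i \<Rightarrow> nat \<Rightarrow> real)
   \<Rightarrow> ('i \<Rightarrow> nat \<Rightarrow> 'w \<Rightarrow> real) \<Rightarrow> ('i \<Rightarrow> 'w set \<Rightarrow> 'w set) list \<Rightarrow> bool" where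
  "improvement_path \<Pi> \<mu> K c v ps \<longleftrightarrow> ps \<noteq> [] \<and> set ps \<subseteq> profiles \<Pi> K \<and>
     (\<forall>t. t + 1 < length ps \<longrightarrow>
        (\<exists>i. (\<forall>j. j \<noteq> i \<longrightarrow> (ps ! (t + 1)) j = (ps ! t) j) \<and>
             payoff \<Pi> \<mu> c v (ps ! (t + 1)) i > payoff \<Pi> \<mu> c v (ps ! t) i))"

end

theory Submission
  imports Defs
begin


definition LC :: "('w \<Rightarrow> real) \<Rightarrow> 'w set \<Rightarrow> 'w set \<Rightarrow> 'w set \<Rightarrow> nat \<Rightarrow> (nat \<Rightarrow> real) \<Rightarrow> bool" where
  "LC g F A C K D \<longleftrightarrow> (\<forall>u\<in>A-F. \<forall>w\<in>C-A. g w \<le> g u) \<and>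
     (\<forall>u\<in>A-F. D (card A) - D (card A - 1) \<le> g u) \<and>
     (card A < K \<longrightarrow> (\<forall>w\<in>C-A. g w \<le> D (card A + 1) - D (card A)))"

definition Phi :: "('w \<Rightarrow> real) \<Rightarrow> (nat \<Rightarrow> real) \<Rightarrow> 'w set \<Rightarrow> real" where
  "Phi g D X = sum g X - D (card X)"

definition dmono :: "(nat \<Rightarrow> real) \<Rightarrow> nat \<Rightarrow> bool" where
  "dmono D K \<longleftrightarrow> (\<forall>k. 1 \<le> k \<longrightarrow> k + 1 \<le> K \<longrightarrow> D k - D (k - 1) \<le> D (k + 1) - D k)"

lemma dmono_le:
  assumes "dmono D K" "1 \<le> i" "i \<le> j" "j \<le> K"
  shows "D i - D (i - 1) \<le> D j - D (j - 1)"
  using assms(3,4)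
proof (induction j)
  case 0 then show ?case using assms(2) by simp
next
  case (Suc j)
  show ?case
  proof (cases "i = Suc j")
    case True then show ?thesis by simp
  next
    case False
    then have "i \<le> j" using Suc by simp
    then have "D i - D (i - 1) \<le> D j - D (j - 1)" using Suc by simp
    moreover have "D j - D (j - 1) \<le> D (j + 1) - D j"
      using assms(1) \<open>i \<le> j\<close> assms(2) Suc.prems unfolding dmono_def by auto
    ultimately show ?thesis by simp
  qed
qed

lemma tel1:
  assumes "dmono D K" "a \<le> b" "b \<le> K"
  shows "real (b - a) * (D (a + 1) - D a) \<le> D b - D a"
  using assms(2,3)
proof (induction b)
  case 0 then show ?case by simp
next
  case (Suc b)
  show ?case
  proof (cases "a = Suc b")
    case True then show ?thesis by simp
  next
    case False
    then have ab: "a \<le> b" using Suc by simp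
    then have IH: "real (b - a) * (D (a + 1) - D a) \<le> D b - D a" using Suc by simp
    have "D (a + 1) - D (a + 1 - 1) \<le> D (Suc b) - D (Suc b - 1)"
      using dmono_le[OF assms(1), of "a+1" "Suc b"] ab Suc.prems by simp
    then have "D (a + 1) - D a \<le> D (Suc b) - D b" by simp
    moreover have "real (Suc b - a) = real (b - a) + 1" using ab by simp
    ultimately show ?thesis using IH by (simp add: algebra_simps)
  qed
qed

lemma tel2:
  assumes "dmono D K" "a \<le> b" "b \<le> K"
  shows "D b - D a \<le> real (b - a) * (D b - D (b - 1))"
  using assms(2,3)
proof (induction b)
  case 0 then show ?case by simp
next
  case (Suc b)
  show ?case
  proof (cases "a = Suc b")
    case True then show ?thesis by simp
  next
    case False
    then have ab: "a \<le> b" using Suc by simp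
    then have IH: "D b - D a \<le> real (b - a) * (D b - D (b - 1))" using Suc by simp
    have "real (b - a) * (D b - D (b - 1)) \<le> real (b - a) * (D (Suc b) - D b)"
    proof (cases "b = 0")
      case True then show ?thesis using ab by simp
    next
      case False
      then have "D b - D (b - 1) \<le> D (b + 1) - D b" using assms(1) Suc.prems unfolding dmono_def by auto
      then show ?thesis by (intro mult_left_mono) auto
    qed
    moreover have "real (Suc b - a) = real (b - a) + 1" using ab by simp
    ultimately show ?thesis using IH by (simp add: algebra_simps)
  qed
qed

lemma LC_mono:
  assumes "LC g F A C K D" "\<And>w. w \<in> A - F \<Longrightarrow> g w \<le> g' w" "\<And>w. w \<in> C - A \<Longrightarrow> g' w \<le> g w"
  shows "LC g' F A C K D"
  using assms unfolding LC_def by (meson order_trans)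

lemma LC_F:
  assumes "LC g F A C K D" "F \<subseteq> F'"
  shows "LC g F' A C K D"
  using assms unfolding LC_def by blast

lemma LC_C:
  assumes "LC g F A C K D" "C' \<subseteq> C"
  shows "LC g F A C' K D"
  using assms unfolding LC_def by blast

lemma sumdiff:
  fixes g g' :: "'a \<Rightarrow> real"
  assumes "finite A" "finite X" "\<And>w. w \<in> X - A \<Longrightarrow> g w \<le> g' w" "\<And>w. w \<in> A - X \<Longrightarrow> g' w \<le> g w"
  shows "sum g X - sum g A \<le> sum g' X - sum g' A"
proof -
  have "sum g X = sum g (X \<inter> A) + sum g (X - A)" by (rule sum.Int_Diff[OF assms(2)])
  moreover have "sum g A = sum g (A \<inter> X) + sum g (A - X)" by (rule sum.Int_Diff[OF assms(1)])
  moreover have "sum g' X = sum g' (X \<inter> A) + sum g' (X - A)" by (rule sum.Int_Diff[OF assms(2)])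
  moreover have "sum g' A = sum g' (A \<inter> X) + sum g' (A - X)" by (rule sum.Int_Diff[OF assms(1)])
  moreover have "sum g (X - A) \<le> sum g' (X - A)" using assms(3) by (intro sum_mono) auto
  moreover have "sum g' (A - X) \<le> sum g (A - X)" using assms(4) by (intro sum_mono) auto
  moreover have "X \<inter> A = A \<inter> X" by blast
  ultimately show ?thesis by simp
qed

lemma ex_argmax:
  fixes f :: "'a \<Rightarrow> real"
  assumes "finite S" "S \<noteq> {}"
  shows "\<exists>x\<in>S. \<forall>y\<in>S. f y \<le> f x"
proof -
  have "Max (f ` S) \<in> f ` S" using assms by simp
  then obtain x where "x \<in> S" "f x = Max (f ` S)" by auto
  then show ?thesis using assms by (metis Max_ge finite_imageI image_eqI)
qed

lemma ex_argmin:
  fixes f :: "'a \<Rightarrow> real"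
  assumes "finite S" "S \<noteq> {}"
  shows "\<exists>x\<in>S. \<forall>y\<in>S. f x \<le> f y"
proof -
  have "Min (f ` S) \<in> f ` S" using assms by simp
  then obtain x where "x \<in> S" "f x = Min (f ` S)" by auto
  then show ?thesis using assms by (metis Min_le finite_imageI image_eqI)
qed

lemma card_split:
  assumes "finite X"
  shows "card X = card (X \<inter> A) + card (X - A)"
proof -
  have "X = (X \<inter> A) \<union> (X - A)" by blast
  then have "card X = card ((X \<inter> A) \<union> (X - A))" by simp
  also have "\<dots> = card (X \<inter> A) + card (X - A)" using assms by (intro card_Un_disjoint) auto
  finally show ?thesis .
qed

lemma LG:
  assumes fin: "finite C" and FA: "F \<subseteq> A" and AC: "A \<subseteq> C" and cA: "card A \<le> K"
    and lc: "LC g F A C K D" and dm: "dmono D K"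
    and FX: "F \<subseteq> X" and XC: "X \<subseteq> C" and cX: "card X \<le> K"
  shows "Phi g D X \<le> Phi g D A"
proof -
  define P where "P = A - X"
  define Q where "Q = X - A"
  have finA: "finite A" using fin AC finite_subset by blast
  have finX: "finite X" using fin XC finite_subset by blast
  have finP: "finite P" "finite Q" using finA finX unfolding P_def Q_def by auto
  have sX: "sum g X = sum g (X \<inter> A) + sum g Q" unfolding Q_def by (rule sum.Int_Diff[OF finX])
  have sA: "sum g A = sum g (X \<inter> A) + sum g P" unfolding P_def
    using sum.Int_Diff[OF finA, of g X] by (simp add: Int_commute)
  have cXe: "card X = card (X \<inter> A) + card Q" unfolding Q_def by (rule card_split[OF finX])
  have cAe: "card A = card (X \<inter> A) + card P" unfolding P_def
    using card_split[OF finA, of X] by (simp add: Int_commute)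
  have L1: "\<And>p q. p \<in> P \<Longrightarrow> q \<in> Q \<Longrightarrow> g q \<le> g p"
    using lc FX XC unfolding LC_def P_def Q_def by blast
  define dA where "dA = D (card A) - D (card A - 1)"
  define d1 where "d1 = D (card A + 1) - D (card A)"
  have L2: "\<And>p. p \<in> P \<Longrightarrow> dA \<le> g p"
    using lc FX unfolding LC_def P_def dA_def by blast
  have L3: "\<And>q. card A < K \<Longrightarrow> q \<in> Q \<Longrightarrow> g q \<le> d1"
    using lc XC unfolding LC_def Q_def d1_def by blast
  have goal: "sum g Q - sum g P \<le> D (card X) - D (card A) \<Longrightarrow> Phi g D X \<le> Phi g D A"
    unfolding Phi_def using sX sA by simp
  consider (lt) "card Q > card P" | (gt) "card P > card Q" | (eq) "card P = card Q" by linarith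
  then show ?thesis
  proof cases
    case lt
    then have cAK: "card A < K" using cXe cAe cX by linarith
    obtain th where th1: "th \<le> d1" and th2: "\<And>q. q \<in> Q \<Longrightarrow> g q \<le> th"
      and th3: "\<And>p. p \<in> P \<Longrightarrow> th \<le> g p"
    proof (cases "P = {}")
      case True
      then show ?thesis using that[of d1] L3 cAK by auto
    next
      case False
      have "\<And>q. q \<in> Q \<Longrightarrow> g q \<le> Min (g ` P)"
        using False finP L1 by (auto intro!: Min.boundedI)
      then show ?thesis using that[of "min d1 (Min (g ` P))"] L3 cAK finP
        by (auto simp: min_le_iff_disj)
    qed
    have sQ: "sum g Q \<le> real (card Q) * th" using th2 sum_bounded_above by metis
    have sP: "real (card P) * th \<le> sum g P" using th3 sum_bounded_below by metis
    define r where "r = real (card Q - card P)"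
    have rq: "real (card Q) = real (card P) + r" unfolding r_def using lt by simp
    have r0: "0 \<le> r" unfolding r_def by simp
    have "r * th \<le> r * d1" using mult_left_mono[OF th1 r0] .
    moreover have "real (card X - card A) * d1 \<le> D (card X) - D (card A)"
      unfolding d1_def using tel1[OF dm, of "card A" "card X"] cXe cAe lt cX by simp
    moreover have "card X - card A = card Q - card P" using cXe cAe lt by simp
    ultimately have "r * th \<le> D (card X) - D (card A)" unfolding r_def by simp
    moreover have "real (card Q) * th - real (card P) * th = r * th" using rq by (simp add: algebra_simps)
    ultimately show ?thesis using sQ sP goal by linarith
  next
    case gt
    then have Pne: "P \<noteq> {}" by auto
    obtain th where th1: "dA \<le> th" and th2: "\<And>q. q \<in> Q \<Longrightarrow> g q \<le> th"
      and th3: "\<And>p. p \<in> P \<Longrightarrow> th \<le> g p"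
    proof (cases "Q = {}")
      case True
      then show ?thesis using that[of dA] L2 by auto
    next
      case False
      have "\<And>p. p \<in> P \<Longrightarrow> Max (g ` Q) \<le> g p"
        using False finP L1 by (auto intro!: Max.boundedI)
      then show ?thesis using that[of "max dA (Max (g ` Q))"] L2 finP
        by (auto simp: le_max_iff_disj)
    qed
    have sQ: "sum g Q \<le> real (card Q) * th" using th2 sum_bounded_above by metis
    have sP: "real (card P) * th \<le> sum g P" using th3 sum_bounded_below by metis
    define r where "r = real (card P - card Q)"
    have rq: "real (card P) = real (card Q) + r" unfolding r_def using gt by simp
    have r0: "0 \<le> r" unfolding r_def by simp
    have "r * dA \<le> r * th" using mult_left_mono[OF th1 r0] .
    moreover have "D (card A) - D (card X) \<le> real (card A - card X) * dA"
      unfolding dA_def using tel2[OF dm, of "card X" "card A"] cXe cAe gt cA by simp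
    moreover have "card A - card X = card P - card Q" using cXe cAe gt by simp
    ultimately have "D (card A) - D (card X) \<le> r * th" unfolding r_def by simp
    moreover have "real (card Q) * th - real (card P) * th = - (r * th)" using rq by (simp add: algebra_simps)
    ultimately show ?thesis using sQ sP goal by linarith
  next
    case eq
    have "sum g Q \<le> sum g P"
    proof (cases "P = {}")
      case True
      then have "Q = {}" using eq finP by simp
      then show ?thesis using True by simp
    next
      case False
      have "\<And>q. q \<in> Q \<Longrightarrow> g q \<le> Min (g ` P)"
        using False finP L1 by (auto intro!: Min.boundedI)
      then have "sum g Q \<le> real (card Q) * Min (g ` P)" using sum_bounded_above by metis
      moreover have "real (card P) * Min (g ` P) \<le> sum g P"
        using finP by (intro sum_bounded_below) auto
      ultimately show ?thesis using eq by simp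
    qed
    moreover have "card X = card A" using cXe cAe eq by simp
    ultimately show ?thesis using goal by simp
  qed
qed

lemma E1:
  assumes fin: "finite C" and FA: "F \<subseteq> A" and AC: "A \<subseteq> C" and cA: "card A \<le> K"
    and zA: "z \<in> A" and zF: "z \<notin> F" and lc: "LC g (insert z F) A C K D"
    and nlc: "\<not> LC g F A C K D" and dm: "dmono D K"
  shows "\<exists>A'. (A' = A - {z} \<or> (\<exists>v\<in>C-A. A' = insert v (A - {z}))) \<and>
           Phi g D A' > Phi g D A \<and> LC g F A' C K D"
proof -
  define k where "k = card A"
  define dk where "dk = D k - D (k - 1)"
  have finA: "finite A" using fin AC finite_subset by blast
  have k1: "1 \<le> k" unfolding k_def using zA finA by (metis One_nat_def Suc_leI card_gt_0_iff empty_iff)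
  have cAz: "card (A - {z}) = k - 1" unfolding k_def using zA finA by simp
  have sAz: "sum g A = g z + sum g (A - {z})" using sum.remove[OF finA zA] .
  have lc1: "\<And>u w. u \<in> A - F \<Longrightarrow> u \<noteq> z \<Longrightarrow> w \<in> C - A \<Longrightarrow> g w \<le> g u"
    using lc unfolding LC_def by blast
  have lc2: "\<And>u. u \<in> A - F \<Longrightarrow> u \<noteq> z \<Longrightarrow> dk \<le> g u"
    using lc unfolding LC_def dk_def k_def by blast
  have lc3: "\<And>w. k < K \<Longrightarrow> w \<in> C - A \<Longrightarrow> g w \<le> D (k + 1) - D k"
    using lc unfolding LC_def k_def by blast
  have fail: "(\<exists>w\<in>C-A. g z < g w) \<or> g z < dk"
  proof (rule ccontr)
    assume "\<not> ?thesis"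
    then have a: "\<forall>w\<in>C-A. g w \<le> g z" "dk \<le> g z" by (auto simp: not_less)
    have "LC g F A C K D" unfolding LC_def
    proof (intro conjI ballI impI)
      fix u w assume "u \<in> A - F" "w \<in> C - A"
      then show "g w \<le> g u" using a lc1 by (cases "u = z") auto
    next
      fix u assume "u \<in> A - F"
      then show "D (card A) - D (card A - 1) \<le> g u" using a lc2 unfolding dk_def k_def by (cases "u = z") auto
    next
      fix w assume "card A < K" "w \<in> C - A"
      then show "g w \<le> D (card A + 1) - D (card A)" using lc3 unfolding k_def by blast
    qed
    then show False using nlc by simp
  qed
  show ?thesis
  proof (cases "\<exists>v\<in>C-A. (\<forall>w\<in>C-A. g w \<le> g v) \<and> dk \<le> g v \<and> g z < g v")
    case True
    then obtain v where vCA: "v \<in> C - A" and vmax: "\<forall>w\<in>C-A. g w \<le> g v"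
      and vdk: "dk \<le> g v" and vz: "g z < g v" by blast
    define A' where "A' = insert v (A - {z})"
    have vnA: "v \<notin> A - {z}" using vCA by auto
    have cA': "card A' = k" unfolding A'_def using cAz vnA finA k1 by simp
    have sA': "sum g A' = g v + sum g (A - {z})" unfolding A'_def using vnA finA by simp
    have "Phi g D A' > Phi g D A" unfolding Phi_def using cA' sA' sAz vz k_def by simp
    moreover have "LC g F A' C K D" unfolding LC_def cA'
    proof (intro conjI ballI impI)
      fix u w assume u: "u \<in> A' - F" and w: "w \<in> C - A'"
      show "g w \<le> g u"
      proof (cases "u = v")
        case True
        then show ?thesis using w vmax vz unfolding A'_def by (cases "w = z") auto
      next
        case False
        then have uA: "u \<in> A - F" "u \<noteq> z" using u unfolding A'_def by auto
        have "g v \<le> g u" using lc1[OF uA vCA] .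
        then show ?thesis using w uA lc1 vz unfolding A'_def by (cases "w = z") auto
      qed
    next
      fix u assume u: "u \<in> A' - F"
      show "D k - D (k - 1) \<le> g u"
        using u vdk lc2 unfolding A'_def dk_def by (cases "u = v") auto
    next
      fix w assume kK: "k < K" and w: "w \<in> C - A'"
      have "g v \<le> D (k + 1) - D k" using lc3[OF kK vCA] .
      then show "g w \<le> D (k + 1) - D k"
        using w vz lc3[OF kK] unfolding A'_def by (cases "w = z") auto
    qed
    ultimately show ?thesis unfolding A'_def using vCA by blast
  next
    case False
    have allw: "\<forall>w\<in>C-A. g w \<le> dk"
    proof
      fix w assume w: "w \<in> C - A"
      have ne: "C - A \<noteq> {}" using w by auto
      obtain v where vCA: "v \<in> C - A" and vmax: "\<forall>w\<in>C-A. g w \<le> g v"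
        using ex_argmax[of "C - A" g] fin ne by auto
      have "\<not> (dk \<le> g v \<and> g z < g v)" using False vCA vmax by blast
      moreover have "g z < dk \<or> g z < g v" using fail vmax by force
      ultimately have "g v \<le> dk" by linarith
      then show "g w \<le> dk" using vmax w by force
    qed
    have zdk: "g z < dk"
    proof (rule ccontr)
      assume "\<not> g z < dk"
      then obtain w where "w \<in> C - A" "g z < g w" using fail by auto
      then show False using allw \<open>\<not> g z < dk\<close> by force
    qed
    define A' where "A' = A - {z}"
    have "Phi g D A' > Phi g D A" unfolding Phi_def A'_def using cAz sAz zdk k_def dk_def by simp
    moreover have "LC g F A' C K D" unfolding LC_def A'_def cAz
    proof (intro conjI ballI impI)
      fix u w assume u: "u \<in> A - {z} - F" and w: "w \<in> C - (A - {z})"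
      have "dk \<le> g u" using lc2 u by auto
      then show "g w \<le> g u" using w u lc1 zdk by (cases "w = z") auto
    next
      fix u assume u: "u \<in> A - {z} - F"
      then have "{u, z} \<subseteq> A" "u \<noteq> z" using zA by auto
      then have "card {u, z} \<le> k" unfolding k_def using card_mono[OF finA] by blast
      then have "k \<ge> 2" using \<open>u \<noteq> z\<close> by simp
      then have "D (k - 1) - D (k - 1 - 1) \<le> D k - D (k - 1)"
        using dmono_le[OF dm, of "k - 1" k] cA k_def by simp
      then show "D (k - 1) - D (k - 1 - 1) \<le> g u" using lc2 u unfolding dk_def by force
    next
      fix w assume "k - 1 < K" and w: "w \<in> C - (A - {z})"
      then show "g w \<le> D (k - 1 + 1) - D (k - 1)"
        using allw zdk k1 unfolding dk_def by (cases "w = z") auto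
    qed
    ultimately show ?thesis unfolding A'_def by blast
  qed
qed

lemma E2:
  assumes fin: "finite C" and FA: "F \<subseteq> A" and AC: "A \<subseteq> C" and cA: "card A \<le> K"
    and xC: "x \<in> C" and xA: "x \<notin> A" and lc: "LC g F A (C - {x}) K D"
    and nlc: "\<not> LC g F A C K D" and dm: "dmono D K"
  shows "\<exists>A'. ((A' = insert x A \<and> card A < K) \<or> (\<exists>u\<in>A-F. A' = insert x (A - {u}))) \<and>
           Phi g D A' > Phi g D A \<and> LC g F A' C K D"
proof -
  define k where "k = card A"
  define d1 where "d1 = D (k + 1) - D k"
  have finA: "finite A" using fin AC finite_subset by blast
  have lc1: "\<And>u w. u \<in> A - F \<Longrightarrow> w \<in> C - A \<Longrightarrow> w \<noteq> x \<Longrightarrow> g w \<le> g u"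
    using lc unfolding LC_def by blast
  have lc2: "\<And>u. u \<in> A - F \<Longrightarrow> D k - D (k - 1) \<le> g u"
    using lc unfolding LC_def k_def by blast
  have lc3: "\<And>w. k < K \<Longrightarrow> w \<in> C - A \<Longrightarrow> w \<noteq> x \<Longrightarrow> g w \<le> d1"
    using lc unfolding LC_def k_def d1_def by blast
  have fail: "(\<exists>u\<in>A-F. g u < g x) \<or> (k < K \<and> d1 < g x)"
  proof (rule ccontr)
    assume "\<not> ?thesis"
    then have a: "\<forall>u\<in>A-F. g x \<le> g u" "k < K \<Longrightarrow> g x \<le> d1" by (auto simp: not_less)
    have "LC g F A C K D" unfolding LC_def
    proof (intro conjI ballI impI)
      fix u w assume "u \<in> A - F" "w \<in> C - A"
      then show "g w \<le> g u" using a lc1 by (cases "w = x") auto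
    next
      fix u assume "u \<in> A - F"
      then show "D (card A) - D (card A - 1) \<le> g u" using lc2 unfolding k_def by blast
    next
      fix w assume "card A < K" "w \<in> C - A"
      then show "g w \<le> D (card A + 1) - D (card A)" using lc3 a unfolding k_def d1_def by (cases "w = x") auto
    qed
    then show False using nlc by simp
  qed
  have sAx: "sum g (insert x A) = g x + sum g A" using finA xA by simp
  show ?thesis
  proof (cases "k < K \<and> d1 < g x \<and> (\<forall>u\<in>A-F. d1 \<le> g u)")
    case True
    then have kK: "k < K" and xd: "d1 < g x" and ud: "\<forall>u\<in>A-F. d1 \<le> g u" by auto
    define A' where "A' = insert x A"
    have cA': "card A' = k + 1" unfolding A'_def k_def using finA xA by simp
    have "Phi g D A' > Phi g D A" unfolding Phi_def using cA' sAx xd unfolding A'_def k_def d1_def by simp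
    moreover have "LC g F A' C K D" unfolding LC_def cA'
    proof (intro conjI ballI impI)
      fix u w assume u: "u \<in> A' - F" and w: "w \<in> C - A'"
      then have wx: "w \<noteq> x" "w \<in> C - A" unfolding A'_def by auto
      show "g w \<le> g u"
      proof (cases "u = x")
        case True then show ?thesis using lc3[OF kK wx(2) wx(1)] xd by simp
      next
        case False then show ?thesis using u lc1 wx unfolding A'_def by auto
      qed
    next
      fix u assume u: "u \<in> A' - F"
      then show "D (k + 1) - D (k + 1 - 1) \<le> g u" using ud xd unfolding A'_def d1_def by (cases "u = x") auto
    next
      fix w assume kK': "k + 1 < K" and w: "w \<in> C - A'"
      then have wx: "w \<noteq> x" "w \<in> C - A" unfolding A'_def by auto
      have "d1 \<le> D (k + 1 + 1) - D (k + 1)"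
      proof -
        have "1 \<le> k + 1" "k + 1 + 1 \<le> K" using kK' by auto
        then have "D (k + 1) - D (k + 1 - 1) \<le> D (k + 1 + 1) - D (k + 1)" using dm unfolding dmono_def by blast
        then show ?thesis unfolding d1_def by simp
      qed
      then show "g w \<le> D (k + 1 + 1) - D (k + 1)" using lc3[OF kK wx(2) wx(1)] by simp
    qed
    ultimately show ?thesis unfolding A'_def using kK k_def by blast
  next
    case False
    have ne: "A - F \<noteq> {}"
    proof
      assume e: "A - F = {}"
      then have "k < K \<and> d1 < g x" using fail by auto
      then show False using False e by auto
    qed
    have finAF: "finite (A - F)" using finA by simp
    obtain u where uAF: "u \<in> A - F" and umin: "\<forall>w\<in>A-F. g u \<le> g w"
      using ex_argmin[OF finAF ne, of g] by blast
    have ux: "g u < g x"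
    proof -
      consider (a) "\<exists>u'\<in>A-F. g u' < g x" | (b) "k < K \<and> d1 < g x" using fail by blast
      then show ?thesis
      proof cases
        case a then show ?thesis using umin by force
      next
        case b
        then obtain u' where "u' \<in> A - F" "g u' < d1" using False by (auto simp: not_le)
        then show ?thesis using umin b by force
      qed
    qed
    have ud1: "k < K \<Longrightarrow> g u \<le> d1"
    proof -
      assume kK: "k < K"
      show "g u \<le> d1"
      proof (cases "g x \<le> d1")
        case True then show ?thesis using ux by simp
      next
        case False': False
        then obtain u' where "u' \<in> A - F" "g u' < d1" using False kK by (auto simp: not_le)
        then show ?thesis using umin by force
      qed
    qed
    define A' where "A' = insert x (A - {u})"
    have uA: "u \<in> A" using uAF by simp
    have xnA: "x \<notin> A - {u}" using xA by simp
    have cA': "card A' = k"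
    proof -
      have "card A > 0" using finA uA card_gt_0_iff by blast
      then show ?thesis using finA xnA uA unfolding A'_def k_def by simp
    qed
    have sA': "sum g A' = g x + sum g A - g u" unfolding A'_def using finA xnA sum.remove[OF finA uA, of g] by simp
    have "Phi g D A' > Phi g D A" unfolding Phi_def using cA' sA' ux k_def by simp
    moreover have "LC g F A' C K D" unfolding LC_def cA'
    proof (intro conjI ballI impI)
      fix u' w assume u': "u' \<in> A' - F" and w: "w \<in> C - A'"
      show "g w \<le> g u'"
      proof (cases "u' = x")
        case True
        show ?thesis
        proof (cases "w = u")
          case True then show ?thesis using ux \<open>u' = x\<close> by simp
        next
          case False
          then have "w \<in> C - A" "w \<noteq> x" using w unfolding A'_def by auto
          then have "g w \<le> g u" using lc1[OF uAF] by blast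
          then show ?thesis using ux \<open>u' = x\<close> by simp
        qed
      next
        case False
        then have u'A: "u' \<in> A - F" "u' \<noteq> u" using u' unfolding A'_def by auto
        show ?thesis
        proof (cases "w = u")
          case True then show ?thesis using umin u'A by simp
        next
          case False
          then have "w \<in> C - A" "w \<noteq> x" using w unfolding A'_def by auto
          then show ?thesis using lc1[OF u'A(1)] by blast
        qed
      qed
    next
      fix u' assume u': "u' \<in> A' - F"
      show "D k - D (k - 1) \<le> g u'"
      proof (cases "u' = x")
        case True then show ?thesis using lc2[OF uAF] ux by simp
      next
        case False then show ?thesis using u' lc2 unfolding A'_def by auto
      qed
    next
      fix w assume kK: "k < K" and w: "w \<in> C - A'"
      show "g w \<le> D (k + 1) - D k"
      proof (cases "w = u")
        case True then show ?thesis using ud1[OF kK] unfolding d1_def by simp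
      next
        case False
        then have "w \<in> C - A" "w \<noteq> x" using w unfolding A'_def by auto
        then show ?thesis using lc3[OF kK] unfolding d1_def by blast
      qed
    qed
    ultimately show ?thesis unfolding A'_def using uAF by blast
  qed
qed

lemma Phi_diff_le:
  fixes g g' :: "'a \<Rightarrow> real"
  assumes "finite A" "finite X" "\<And>w. w \<in> X - A \<Longrightarrow> g w \<le> g' w" "\<And>w. w \<in> A - X \<Longrightarrow> g' w \<le> g w"
  shows "Phi g D X - Phi g D A \<le> Phi g' D X - Phi g' D A"
  using sumdiff[OF assms] unfolding Phi_def by simp

lemma Phi_diff_eq:
  fixes g g' :: "'a \<Rightarrow> real"
  assumes "finite A" "finite X" "\<And>w. w \<in> X - A \<Longrightarrow> g w = g' w" "\<And>w. w \<in> A - X \<Longrightarrow> g' w = g w"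
  shows "Phi g D X - Phi g D A = Phi g' D X - Phi g' D A"
  using Phi_diff_le[OF assms(1,2), of g g' D] Phi_diff_le[OF assms(1,2), of g' g D] assms(3,4) by force




lemma sum_upd_point:
  fixes g :: "'a \<Rightarrow> real"
  assumes "finite S" "x \<in> S"
  shows "(\<Sum>y\<in>S. if y = x then a else g y) = (\<Sum>y\<in>S. g y) - g x + a"
proof -
  have "(\<Sum>y\<in>S. if y = x then a else g y) = a + (\<Sum>y\<in>S-{x}. if y = x then a else g y)"
    using sum.remove[OF assms, of "\<lambda>y. if y = x then a else g y"] by simp
  also have "(\<Sum>y\<in>S-{x}. if y = x then a else g y) = (\<Sum>y\<in>S-{x}. g y)" by (rule sum.cong) auto
  also have "(\<Sum>y\<in>S. g y) = g x + (\<Sum>y\<in>S-{x}. g y)" using sum.remove[OF assms] by simp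
  ultimately show ?thesis by simp
qed

locale sg =
  fixes \<Pi> :: "'i::finite \<Rightarrow> 'w::finite set set"
    and \<mu> :: "'w \<Rightarrow> real" and K :: "'i \<Rightarrow> nat" and c :: "'i \<Rightarrow> nat \<Rightarrow> real"
    and v :: "'i \<Rightarrow> nat \<Rightarrow> 'w \<Rightarrow> real" and vs :: "'w \<Rightarrow> real"
  assumes SG: "search_game \<Pi> \<mu> K c v vs"
begin

definition nn :: nat where "nn = card (UNIV :: 'i set)"
definition W :: "'i \<Rightarrow> 'w \<Rightarrow> nat \<Rightarrow> real" where "W i w m = \<mu> w * v i (max 1 (min m nn)) w"
definition Dc :: "'i \<Rightarrow> 'w set \<Rightarrow> nat \<Rightarrow> real" where "Dc i C k = (\<Sum>w\<in>C. \<mu> w) * c i k"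
definition oth :: "('i \<Rightarrow> 'w set \<Rightarrow> 'w set) \<Rightarrow> 'i \<Rightarrow> 'w \<Rightarrow> nat" where
  "oth s i w = card {j. j \<noteq> i \<and> w \<in> s j (cell (\<Pi> j) w)}"
definition cnt :: "('i \<Rightarrow> 'w set \<Rightarrow> 'w set) \<Rightarrow> 'w \<Rightarrow> nat" where "cnt s w = searchers \<Pi> s w"
definition act :: "('i \<Rightarrow> 'w set \<Rightarrow> 'w set) \<Rightarrow> 'i \<Rightarrow> 'w \<Rightarrow> real" where "act s i w = W i w (oth s i w + 1)"
definition valR :: "'i \<Rightarrow> ('w \<Rightarrow> nat) \<Rightarrow> 'w set \<Rightarrow> 'w \<Rightarrow> real" where
  "valR i R A w = W i w (R w + (if w \<in> A then 0 else 1))"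
definition Fset :: "('i \<times> 'w) set \<Rightarrow> 'i \<Rightarrow> 'w set \<Rightarrow> 'w set" where "Fset Fz i C = {w \<in> C. (i, w) \<in> Fz}"
definition contains :: "('i \<times> 'w) set \<Rightarrow> ('i \<Rightarrow> 'w set \<Rightarrow> 'w set) \<Rightarrow> bool" where
  "contains Fz s \<longleftrightarrow> (\<forall>i w. (i, w) \<in> Fz \<longrightarrow> w \<in> s i (cell (\<Pi> i) w))"
definition stableR :: "('i \<times> 'w) set \<Rightarrow> ('w \<Rightarrow> nat) \<Rightarrow> ('i \<Rightarrow> 'w set \<Rightarrow> 'w set) \<Rightarrow> bool" where
  "stableR Fz R s \<longleftrightarrow> (\<forall>i. \<forall>C\<in>\<Pi> i. LC (valR i R (s i C)) (Fset Fz i C) (s i C) C (K i) (Dc i C))"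
definition relNE :: "('i \<times> 'w) set \<Rightarrow> ('i \<Rightarrow> 'w set \<Rightarrow> 'w set) \<Rightarrow> bool" where
  "relNE Fz s \<longleftrightarrow> s \<in> profiles \<Pi> K \<and> contains Fz s \<and>
     (\<forall>i. \<forall>C\<in>\<Pi> i. LC (act s i) (Fset Fz i C) (s i C) C (K i) (Dc i C))"
definition step :: "('i \<Rightarrow> 'w set \<Rightarrow> 'w set) \<Rightarrow> ('i \<Rightarrow> 'w set \<Rightarrow> 'w set) \<Rightarrow> bool" where
  "step s s' \<longleftrightarrow> (\<exists>i. (\<forall>j. j \<noteq> i \<longrightarrow> s' j = s j) \<and> payoff \<Pi> \<mu> c v s' i > payoff \<Pi> \<mu> c v s i)"
definition upd :: "('i \<Rightarrow> 'w set \<Rightarrow> 'w set) \<Rightarrow> 'i \<Rightarrow> 'w set \<Rightarrow> 'w set \<Rightarrow> ('i \<Rightarrow> 'w set \<Rightarrow> 'w set)" where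
  "upd s i C X = s(i := (s i)(C := X))"
definition Pot :: "('i \<Rightarrow> 'w \<Rightarrow> real) \<Rightarrow> ('i \<Rightarrow> 'w set \<Rightarrow> 'w set) \<Rightarrow> real" where
  "Pot f s = (\<Sum>i\<in>UNIV. \<Sum>C\<in>\<Pi> i. Phi (f i) (Dc i C) (s i C))"

lemma part: "is_partition UNIV (\<Pi> i)" using SG unfolding search_game_def by blast
lemma mu_nonneg: "\<mu> w \<ge> 0" using SG unfolding search_game_def by blast

lemma cell_props: "cell (\<Pi> i) w \<in> \<Pi> i \<and> w \<in> cell (\<Pi> i) w"
proof -
  have "\<exists>!C. C \<in> \<Pi> i \<and> w \<in> C" using part[of i] unfolding is_partition_def by blast
  then show ?thesis unfolding cell_def by (rule theI')
qed

lemma cell_eq: "C \<in> \<Pi> i \<Longrightarrow> w \<in> C \<Longrightarrow> cell (\<Pi> i) w = C"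
proof -
  assume a: "C \<in> \<Pi> i" "w \<in> C"
  have "\<exists>!C. C \<in> \<Pi> i \<and> w \<in> C" using part[of i] unfolding is_partition_def by blast
  then show ?thesis unfolding cell_def using a by (intro the1_equality) auto
qed

lemma cells_disj: "C \<in> \<Pi> i \<Longrightarrow> C' \<in> \<Pi> i \<Longrightarrow> w \<in> C \<Longrightarrow> w \<in> C' \<Longrightarrow> C = C'"
  using cell_eq by metis

lemma sum_cells:
  fixes f :: "'w \<Rightarrow> real"
  shows "(\<Sum>w\<in>UNIV. f w) = (\<Sum>C\<in>\<Pi> i. \<Sum>w\<in>C. f w)"
proof -
  have U: "\<Union>(\<Pi> i) = UNIV" using cell_props by blast
  have "sum f (\<Union>(\<Pi> i)) = sum (sum f) (\<Pi> i)"
    using sum.Union_disjoint[of "\<Pi> i" f] by (auto dest: cells_disj)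
  then show ?thesis using U by simp
qed

lemma nn_pos: "nn \<ge> 1" unfolding nn_def by (simp add: Suc_le_eq card_gt_0_iff)

lemma v_mono: "1 \<le> a \<Longrightarrow> a \<le> b \<Longrightarrow> b \<le> nn \<Longrightarrow> v i b w \<le> v i a w"
proof (induction b)
  case 0 then show ?case by simp
next
  case (Suc b)
  show ?case
  proof (cases "a = Suc b")
    case True then show ?thesis by simp
  next
    case False
    then have "a \<le> b" using Suc by simp
    then have "v i b w \<le> v i a w" using Suc by simp
    moreover have "v i (b + 1) w \<le> v i b w" using SG Suc.prems \<open>a \<le> b\<close>
      unfolding search_game_def nn_def by auto
    ultimately show ?thesis by simp
  qed
qed

lemma W_anti: "m \<le> m' \<Longrightarrow> W i w m' \<le> W i w m"
proof -
  assume "m \<le> m'"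
  then have "v i (max 1 (min m' nn)) w \<le> v i (max 1 (min m nn)) w"
    using nn_pos by (intro v_mono) auto
  then show ?thesis unfolding W_def using mu_nonneg by (simp add: mult_left_mono)
qed

lemma dmono_Dc: "C \<in> \<Pi> i \<Longrightarrow> dmono (Dc i C) (K i)"
proof -
  have m: "(\<Sum>w\<in>C. \<mu> w) \<ge> 0" using mu_nonneg by (simp add: sum_nonneg)
  have "\<forall>k. 1 \<le> k \<and> k + 1 \<le> K i \<longrightarrow> c i (k + 1) - c i k \<ge> c i k - c i (k - 1)"
    using SG unfolding search_game_def by blast
  then show ?thesis unfolding dmono_def Dc_def using m
    by (auto simp: right_diff_distrib[symmetric] intro!: mult_left_mono)
qed

lemma oth_le: "oth s i w + 1 \<le> nn"
proof -
  have "{j. j \<noteq> i \<and> w \<in> s j (cell (\<Pi> j) w)} \<subseteq> UNIV - {i}" by blast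
  then have "oth s i w \<le> card (UNIV - {i} :: 'i set)" unfolding oth_def by (intro card_mono) auto
  then show ?thesis using nn_pos unfolding nn_def by (simp add: card_Diff_singleton)
qed

lemma act_W: "act s i w = \<mu> w * v i (oth s i w + 1) w"
  unfolding act_def W_def using oth_le[of s i w] by (simp add: max_def min_def)

lemma searchers_upd:
  "searchers \<Pi> (s(i := \<sigma>)) w = oth s i w + (if w \<in> \<sigma> (cell (\<Pi> i) w) then 1 else 0)"
proof -
  define S where "S = {j. j \<noteq> i \<and> w \<in> s j (cell (\<Pi> j) w)}"
  have "{j. w \<in> (s(i := \<sigma>)) j (cell (\<Pi> j) w)} = (if w \<in> \<sigma> (cell (\<Pi> i) w) then insert i S else S)"
    unfolding S_def by auto
  moreover have "i \<notin> S" unfolding S_def by simp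
  ultimately show ?thesis unfolding searchers_def oth_def S_def[symmetric] by simp
qed

lemma cnt_eq: "cnt s w = oth s i w + (if w \<in> s i (cell (\<Pi> i) w) then 1 else 0)"
  using searchers_upd[of s i "s i" w] unfolding cnt_def by simp

lemma oth_upd: "oth (s(i := \<sigma>)) i = oth s i"
  unfolding oth_def by (intro ext) (rule arg_cong[where f = card], auto)

lemma act_upd: "act (s(i := \<sigma>)) i = act s i"
  unfolding act_def by (simp add: oth_upd)

lemma payoff_decomp:
  assumes "\<And>C. C \<in> \<Pi> i \<Longrightarrow> \<sigma> C \<subseteq> C"
  shows "payoff \<Pi> \<mu> c v (s(i := \<sigma>)) i = (\<Sum>C\<in>\<Pi> i. Phi (act s i) (Dc i C) (\<sigma> C))"
proof -
  define f where "f w = \<mu> w * payoff_at \<Pi> c v (s(i := \<sigma>)) i w" for w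
  have f_eq: "f w = (if w \<in> \<sigma> C then act s i w else 0) - \<mu> w * c i (card (\<sigma> C))"
    if "C \<in> \<Pi> i" "w \<in> C" for C w
    using that unfolding f_def payoff_at_def
    by (simp add: cell_eq searchers_upd act_W right_diff_distrib)
  have "payoff \<Pi> \<mu> c v (s(i := \<sigma>)) i = (\<Sum>C\<in>\<Pi> i. \<Sum>w\<in>C. f w)"
    unfolding payoff_def f_def[symmetric] by (rule sum_cells)
  also have "\<dots> = (\<Sum>C\<in>\<Pi> i. Phi (act s i) (Dc i C) (\<sigma> C))"
  proof (rule sum.cong[OF refl])
    fix C assume C: "C \<in> \<Pi> i"
    have "(\<Sum>w\<in>C. f w) = (\<Sum>w\<in>C. (if w \<in> \<sigma> C then act s i w else 0)) - (\<Sum>w\<in>C. \<mu> w * c i (card (\<sigma> C)))"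
      using f_eq[OF C] by (simp add: sum_subtractf)
    also have "(\<Sum>w\<in>C. (if w \<in> \<sigma> C then act s i w else 0)) = sum (act s i) (C \<inter> \<sigma> C)"
      by (simp add: sum.inter_restrict)
    also have "C \<inter> \<sigma> C = \<sigma> C" using assms[OF C] by blast
    also have "(\<Sum>w\<in>C. \<mu> w * c i (card (\<sigma> C))) = Dc i C (card (\<sigma> C))"
      unfolding Dc_def by (simp add: sum_distrib_right)
    finally show "(\<Sum>w\<in>C. f w) = Phi (act s i) (Dc i C) (\<sigma> C)" unfolding Phi_def .
  qed
  finally show ?thesis .
qed

lemma prof_sub: "s \<in> profiles \<Pi> K \<Longrightarrow> C \<in> \<Pi> i \<Longrightarrow> s i C \<subseteq> C \<and> card (s i C) \<le> K i"
  unfolding profiles_def strategies_def by blast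

lemma payoff_self: "s \<in> profiles \<Pi> K \<Longrightarrow> payoff \<Pi> \<mu> c v s i = (\<Sum>C\<in>\<Pi> i. Phi (act s i) (Dc i C) (s i C))"
  using payoff_decomp[of i "s i" s] prof_sub by simp

lemma upd_prof:
  assumes "s \<in> profiles \<Pi> K" "C \<in> \<Pi> i" "X \<subseteq> C" "card X \<le> K i"
  shows "upd s i C X \<in> profiles \<Pi> K"
  using assms unfolding profiles_def strategies_def upd_def by auto

lemma payoff_upd:
  assumes "s \<in> profiles \<Pi> K" "C \<in> \<Pi> i" "X \<subseteq> C"
  shows "payoff \<Pi> \<mu> c v (upd s i C X) i =
           payoff \<Pi> \<mu> c v s i - Phi (act s i) (Dc i C) (s i C) + Phi (act s i) (Dc i C) X"
proof -
  have sub: "\<And>C'. C' \<in> \<Pi> i \<Longrightarrow> ((s i)(C := X)) C' \<subseteq> C'" using assms prof_sub by auto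
  have "payoff \<Pi> \<mu> c v (upd s i C X) i = (\<Sum>C'\<in>\<Pi> i. Phi (act s i) (Dc i C') (((s i)(C := X)) C'))"
    unfolding upd_def by (rule payoff_decomp[OF sub])
  also have "\<dots> = (\<Sum>C'\<in>\<Pi> i. if C' = C then Phi (act s i) (Dc i C) X else Phi (act s i) (Dc i C') (s i C'))"
    by (rule sum.cong) auto
  also have "\<dots> = (\<Sum>C'\<in>\<Pi> i. Phi (act s i) (Dc i C') (s i C')) - Phi (act s i) (Dc i C) (s i C) + Phi (act s i) (Dc i C) X"
    by (rule sum_upd_point[OF _ assms(2)]) simp
  finally show ?thesis using payoff_self[OF assms(1)] by simp
qed

lemma step_upd:
  assumes "s \<in> profiles \<Pi> K" "C \<in> \<Pi> i" "X \<subseteq> C" "Phi (act s i) (Dc i C) X > Phi (act s i) (Dc i C) (s i C)"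
  shows "step s (upd s i C X)"
  unfolding step_def using payoff_upd[OF assms(1-3)] assms(4) by (intro exI[of _ i]) (auto simp: upd_def)

lemma cnt_upd:
  assumes "C \<in> \<Pi> i"
  shows "cnt (upd s i C X) w = (if w \<in> C then oth s i w + (if w \<in> X then 1 else 0) else cnt s w)"
proof -
  have "cnt (upd s i C X) w = oth s i w + (if w \<in> ((s i)(C := X)) (cell (\<Pi> i) w) then 1 else 0)"
    unfolding upd_def cnt_def by (rule searchers_upd)
  then show ?thesis using cell_eq[OF assms] cnt_eq[of s w i] cell_props[of i w] by auto
qed

lemma act_valR: "C \<in> \<Pi> i \<Longrightarrow> w \<in> C \<Longrightarrow> valR i (cnt s) (s i C) w = act s i w"
  unfolding valR_def act_def using cnt_eq[of s w i] cell_eq by simp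

lemma act_upd2: "act (upd s i C X) i = act s i"
  unfolding upd_def by (rule act_upd)

lemma Pot_upd:
  assumes "C \<in> \<Pi> i"
  shows "Pot f (upd s i C X) = Pot f s - Phi (f i) (Dc i C) (s i C) + Phi (f i) (Dc i C) X"
proof -
  define T where "T s j = (\<Sum>C\<in>\<Pi> j. Phi (f j) (Dc j C) (s j C))" for s j
  have Ti: "T (upd s i C X) i = T s i - Phi (f i) (Dc i C) (s i C) + Phi (f i) (Dc i C) X"
  proof -
    have "T (upd s i C X) i = (\<Sum>C'\<in>\<Pi> i. if C' = C then Phi (f i) (Dc i C) X else Phi (f i) (Dc i C') (s i C'))"
      unfolding T_def upd_def by (rule sum.cong) auto
    also have "\<dots> = T s i - Phi (f i) (Dc i C) (s i C) + Phi (f i) (Dc i C) X"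
      unfolding T_def by (rule sum_upd_point[OF _ assms]) simp
    finally show ?thesis .
  qed
  have "Pot f (upd s i C X) = (\<Sum>j\<in>UNIV. if j = i then T (upd s i C X) i else T s j)"
    unfolding Pot_def T_def by (rule sum.cong) (auto simp: upd_def)
  also have "\<dots> = (\<Sum>j\<in>UNIV. T s j) - T s i + T (upd s i C X) i"
    by (rule sum_upd_point) auto
  finally show ?thesis using Ti unfolding Pot_def T_def by simp
qed

lemma contains_sub: "contains Fz s \<Longrightarrow> C \<in> \<Pi> i \<Longrightarrow> Fset Fz i C \<subseteq> s i C"
  unfolding contains_def Fset_def using cell_eq by blast

lemma contains_upd:
  assumes "contains Fz s" "C \<in> \<Pi> i" "Fset Fz i C \<subseteq> X"
  shows "contains Fz (upd s i C X)"
  unfolding contains_def upd_def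
proof (intro allI impI)
  fix j w assume jw: "(j, w) \<in> Fz"
  show "w \<in> (s(i := (s i)(C := X))) j (cell (\<Pi> j) w)"
  proof (cases "j = i \<and> cell (\<Pi> j) w = C")
    case True
    then have "j = i" "cell (\<Pi> i) w = C" by auto
    then have "w \<in> C" using cell_props[of i w] by simp
    then show ?thesis using True jw assms(3) unfolding Fset_def by auto
  next
    case False
    then show ?thesis using assms(1) jw unfolding contains_def by auto
  qed
qed

lemma impr_iff: "improvement_path \<Pi> \<mu> K c v ps \<longleftrightarrow> ps \<noteq> [] \<and> set ps \<subseteq> profiles \<Pi> K \<and>
   (\<forall>t. t + 1 < length ps \<longrightarrow> step (ps ! t) (ps ! (t + 1)))"
  unfolding improvement_path_def step_def by blast

lemma impr_single: "s \<in> profiles \<Pi> K \<Longrightarrow> improvement_path \<Pi> \<mu> K c v [s]"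
  unfolding impr_iff by simp

lemma impr_cons:
  assumes "improvement_path \<Pi> \<mu> K c v ps" "s \<in> profiles \<Pi> K" "step s (hd ps)"
  shows "improvement_path \<Pi> \<mu> K c v (s # ps)"
  unfolding impr_iff
proof (intro conjI allI impI)
  show "s # ps \<noteq> []" by simp
  show "set (s # ps) \<subseteq> profiles \<Pi> K" using assms(1,2) unfolding impr_iff by simp
next
  fix t assume t: "t + 1 < length (s # ps)"
  show "step ((s # ps) ! t) ((s # ps) ! (t + 1))"
  proof (cases t)
    case 0 then show ?thesis using assms(1,3) unfolding impr_iff by (simp add: hd_conv_nth)
  next
    case (Suc t')
    then show ?thesis using assms(1) t unfolding impr_iff by simp
  qed
qed

lemma impr_tl:
  assumes "improvement_path \<Pi> \<mu> K c v (s # ps)" "ps \<noteq> []"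
  shows "improvement_path \<Pi> \<mu> K c v ps \<and> step s (hd ps)"
proof -
  have a: "\<forall>t. t + 1 < length (s # ps) \<longrightarrow> step ((s # ps) ! t) ((s # ps) ! (t + 1))" "set (s # ps) \<subseteq> profiles \<Pi> K"
    using assms(1) unfolding impr_iff by blast+
  have "step s (hd ps)" using a(1)[rule_format, of 0] assms(2) by (simp add: hd_conv_nth)
  moreover have "improvement_path \<Pi> \<mu> K c v ps" unfolding impr_iff
  proof (intro conjI allI impI)
    show "ps \<noteq> []" by fact
    show "set ps \<subseteq> profiles \<Pi> K" using a(2) by simp
    fix t assume "t + 1 < length ps"
    then show "step (ps ! t) (ps ! (t + 1))" using a(1)[rule_format, of "Suc t"] by simp
  qed
  ultimately show ?thesis by simp
qed

lemma impr_append: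
  assumes "improvement_path \<Pi> \<mu> K c v xs" "improvement_path \<Pi> \<mu> K c v ys" "step (last xs) (hd ys)"
  shows "improvement_path \<Pi> \<mu> K c v (xs @ ys)"
  using assms
proof (induction xs)
  case Nil then show ?case by (simp add: impr_iff)
next
  case (Cons a xs)
  show ?case
  proof (cases "xs = []")
    case True
    then show ?thesis using Cons.prems impr_cons[of ys a] unfolding impr_iff by simp
  next
    case False
    then have "improvement_path \<Pi> \<mu> K c v xs" "step a (hd xs)" using impr_tl[OF Cons.prems(1)] by auto
    moreover have "last (a # xs) = last xs" using False by simp
    ultimately have "improvement_path \<Pi> \<mu> K c v (xs @ ys)" using Cons by simp
    moreover have "a \<in> profiles \<Pi> K" using Cons.prems(1) unfolding impr_iff by simp
    ultimately show ?thesis using impr_cons[of "xs @ ys" a] \<open>step a (hd xs)\<close> False by simp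
  qed
qed

end



context sg begin

lemma cnt_C: "C \<in> \<Pi> i \<Longrightarrow> w \<in> C \<Longrightarrow> cnt s w = oth s i w + (if w \<in> s i C then 1 else 0)"
  using cnt_eq[of s w i] cell_eq by simp

lemma upd_other: "(j, C') \<noteq> (i, C) \<Longrightarrow> upd s i C X j C' = s j C'"
  unfolding upd_def by auto

lemma upd_same: "upd s i C X i C = X"
  unfolding upd_def by auto

lemma pot_card_less:
  assumes "Pot f s < Pot f s'"
  shows "card {t. Pot f s' < Pot f t} < card {t. Pot f s < Pot f t}"
proof (rule psubset_card_mono)
  show "finite {t. Pot f s < Pot f t}" by simp
  show "{t. Pot f s' < Pot f t} \<subset> {t. Pot f s < Pot f t}" using assms by auto
qed

lemma DEF:
  assumes "s \<in> profiles \<Pi> K" "contains Fz s" "stableR Fz R s"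
    "\<forall>w. w \<noteq> x \<longrightarrow> cnt s w = R w" "cnt s x \<le> R x" "R x \<le> cnt s x + 1"
  shows "\<exists>ps. improvement_path \<Pi> \<mu> K c v ps \<and> hd ps = s \<and> relNE Fz (last ps)"
  using assms
proof (induction "card {t. Pot (\<lambda>i w. W i w (R w)) s < Pot (\<lambda>i w. W i w (R w)) t}" arbitrary: s x rule: less_induct)
  case less
  define f where "f = (\<lambda>i w. W i w (R w))"
  note prof = less.prems(1) and cont = less.prems(2) and stab = less.prems(3)
  have cntR: "\<And>w. cnt s w \<le> R w" using less.prems(4,5) by (metis order_refl)
  show ?case
  proof (cases "relNE Fz s")
    case True
    then show ?thesis using impr_single[OF prof] by (intro exI[of _ "[s]"]) simp
  next
    case False
    then obtain i C where C: "C \<in> \<Pi> i" and nlc: "\<not> LC (act s i) (Fset Fz i C) (s i C) C (K i) (Dc i C)"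
      unfolding relNE_def using prof cont by blast
    define A where "A = s i C"
    define F where "F = Fset Fz i C"
    have AC: "A \<subseteq> C" and cA: "card A \<le> K i" using prof_sub[OF prof C] unfolding A_def by auto
    have FA: "F \<subseteq> A" using contains_sub[OF cont C] unfolding A_def F_def .
    have finC: "finite C" by simp
    have lcR: "LC (valR i R A) F A C (K i) (Dc i C)" using stab C unfolding stableR_def A_def F_def by blast
    have cw: "\<And>w. w \<in> C \<Longrightarrow> cnt s w = oth s i w + (if w \<in> A then 1 else 0)"
      using cnt_C[OF C] unfolding A_def by blast
    have xfacts: "x \<in> C \<and> x \<notin> A"
    proof (rule ccontr)
      assume nx: "\<not> (x \<in> C \<and> x \<notin> A)"
      have "LC (act s i) F A C (K i) (Dc i C)"
      proof (rule LC_mono[OF lcR])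
        fix w assume w: "w \<in> A - F"
        then have "oth s i w + 1 \<le> R w" using cw[of w] AC cntR[of w] by auto
        then show "valR i R A w \<le> act s i w" unfolding valR_def act_def using w by (simp add: W_anti)
      next
        fix w assume w: "w \<in> C - A"
        then have "w \<noteq> x" using nx by auto
        then have "R w + 1 \<le> oth s i w + 1" using cw[of w] w less.prems(4) by auto
        then show "act s i w \<le> valR i R A w" unfolding valR_def act_def using w by (simp add: W_anti)
      qed
      then show False using nlc unfolding A_def F_def by simp
    qed
    have lcx: "LC (act s i) F A (C - {x}) (K i) (Dc i C)"
    proof (rule LC_mono[OF LC_C[OF lcR]])
      show "C - {x} \<subseteq> C" by blast
    next
      fix w assume w: "w \<in> A - F"
      then have "oth s i w + 1 \<le> R w" using cw[of w] AC cntR[of w] by auto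
      then show "valR i R A w \<le> act s i w" unfolding valR_def act_def using w by (simp add: W_anti)
    next
      fix w assume w: "w \<in> C - {x} - A"
      then have "R w + 1 \<le> oth s i w + 1" using cw[of w] less.prems(4) by auto
      then show "act s i w \<le> valR i R A w" unfolding valR_def act_def using w by (simp add: W_anti)
    qed
    have cx: "cnt s x + 1 = R x"
    proof (rule ccontr)
      assume "cnt s x + 1 \<noteq> R x"
      then have "cnt s x = R x" using less.prems(5,6) by simp
      then have eq: "\<And>w. cnt s w = R w" using less.prems(4) by metis
      have ev: "\<And>w. w \<in> C \<Longrightarrow> valR i R A w = act s i w"
        using act_valR[OF C, of _ s] eq unfolding A_def by (metis ext)
      have "LC (act s i) F A C (K i) (Dc i C)"
        by (rule LC_mono[OF lcR]) (use ev AC in auto)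
      then show False using nlc unfolding A_def F_def by simp
    qed
    obtain A' where A'form: "(A' = insert x A \<and> card A < K i) \<or> (\<exists>u\<in>A-F. A' = insert x (A - {u}))"
      and imp: "Phi (act s i) (Dc i C) A' > Phi (act s i) (Dc i C) A"
      and lc': "LC (act s i) F A' C (K i) (Dc i C)"
      using E2[OF finC FA AC cA _ _ lcx _ dmono_Dc[OF C]] xfacts nlc unfolding A_def F_def by blast
    have A'C: "A' \<subseteq> C" using A'form xfacts AC by auto
    have FA': "F \<subseteq> A'" using A'form FA by auto
    have cA': "card A' \<le> K i"
    proof -
      have finA: "finite A" using AC finite_subset by auto
      { assume "A' = insert x A \<and> card A < K i"
        then have ?thesis using finA xfacts by simp }
      moreover
      { assume "\<exists>u\<in>A-F. A' = insert x (A - {u})"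
        then obtain u where "u \<in> A" "A' = insert x (A - {u})" by auto
        moreover have "card A > 0" using finA \<open>u \<in> A\<close> card_gt_0_iff by blast
        ultimately have "card A' = card A" using finA xfacts \<open>u \<in> A\<close> by simp
        then have ?thesis using cA by simp }
      ultimately show ?thesis using A'form by blast
    qed
    have A'sub: "A' \<subseteq> insert x A" using A'form by auto
    define s' where "s' = upd s i C A'"
    have prof': "s' \<in> profiles \<Pi> K" unfolding s'_def by (rule upd_prof[OF prof C A'C cA'])
    have cont': "contains Fz s'" unfolding s'_def by (rule contains_upd[OF cont C]) (use FA' F_def in simp)
    have stp: "step s s'" unfolding s'_def by (rule step_upd[OF prof C A'C]) (use imp A_def in simp)
    have stab': "stableR Fz R s'"
      unfolding stableR_def
    proof (intro allI ballI)
      fix j C' assume C': "C' \<in> \<Pi> j"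
      show "LC (valR j R (s' j C')) (Fset Fz j C') (s' j C') C' (K j) (Dc j C')"
      proof (cases "(j, C') = (i, C)")
        case True
        then have jC: "j = i" "C' = C" by auto
        have "LC (valR i R A') F A' C (K i) (Dc i C)"
        proof (rule LC_mono[OF lc'])
          fix w assume w: "w \<in> A' - F"
          have "R w \<le> oth s i w + 1"
          proof (cases "w = x")
            case True then show ?thesis using cw[of x] xfacts cx by simp
          next
            case False
            then have "w \<in> A" using w A'sub by auto
            then show ?thesis using cw[of w] AC less.prems(4) False by auto
          qed
          then show "act s i w \<le> valR i R A' w" unfolding valR_def act_def using w by (simp add: W_anti)
        next
          fix w assume w: "w \<in> C - A'"
          have "oth s i w \<le> R w" using cw[of w] w cntR[of w] by auto
          then show "valR i R A' w \<le> act s i w" unfolding valR_def act_def using w by (simp add: W_anti)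
        qed
        then show ?thesis using jC unfolding F_def by (simp add: s'_def upd_same)
      next
        case False
        then show ?thesis using stab C' unfolding stableR_def s'_def upd_other[OF False] by auto
      qed
    qed
    have cnt': "\<And>w. cnt s' w = (if w \<in> C then oth s i w + (if w \<in> A' then 1 else 0) else cnt s w)"
      unfolding s'_def by (rule cnt_upd[OF C])
    have newx: "\<exists>x'. (\<forall>w. w \<noteq> x' \<longrightarrow> cnt s' w = R w) \<and> cnt s' x' \<le> R x' \<and> R x' \<le> cnt s' x' + 1"
    proof -
      { assume a: "A' = insert x A \<and> card A < K i"
        have "\<forall>w. cnt s' w = R w"
        proof
          fix w show "cnt s' w = R w"
          proof (cases "w \<in> C")
            case True
            then show ?thesis using cnt' cw[of w] a cx xfacts less.prems(4) by (cases "w = x") auto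
          next
            case False
            then have "w \<noteq> x" using xfacts by auto
            then show ?thesis using cnt' less.prems(4) False by simp
          qed
        qed
        then have ?thesis by auto }
      moreover
      { assume "\<exists>u\<in>A-F. A' = insert x (A - {u})"
        then obtain u where u: "u \<in> A" "A' = insert x (A - {u})" by auto
        have ux: "u \<noteq> x" using u xfacts by auto
        have "(\<forall>w. w \<noteq> u \<longrightarrow> cnt s' w = R w) \<and> cnt s' u \<le> R u \<and> R u \<le> cnt s' u + 1"
        proof (intro conjI allI impI)
          fix w assume wu: "w \<noteq> u"
          show "cnt s' w = R w"
          proof (cases "w \<in> C")
            case True
            then show ?thesis using cnt' cw[of w] u cx xfacts less.prems(4) wu by (cases "w = x") auto
          next
            case False
            then have "w \<noteq> x" using xfacts by auto
            then show ?thesis using cnt' less.prems(4) False by simp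
          qed
        next
          show "cnt s' u \<le> R u" using cnt' cw[of u] u AC less.prems(4) ux by auto
          show "R u \<le> cnt s' u + 1" using cnt' cw[of u] u AC less.prems(4) ux by auto
        qed
        then have ?thesis by blast }
      ultimately show ?thesis using A'form by blast
    qed
    then obtain x' where x': "\<forall>w. w \<noteq> x' \<longrightarrow> cnt s' w = R w" "cnt s' x' \<le> R x'" "R x' \<le> cnt s' x' + 1" by blast
    have finA: "finite A" "finite A'" by simp_all
    have peq: "Phi (f i) (Dc i C) A' - Phi (f i) (Dc i C) A = Phi (act s i) (Dc i C) A' - Phi (act s i) (Dc i C) A"
    proof (rule Phi_diff_eq[OF finA(1,2)])
      fix w assume w: "w \<in> A' - A"
      then have "w = x" using A'sub by auto
      then show "f i w = act s i w" unfolding f_def act_def using cw[of x] xfacts cx by simp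
    next
      fix w assume w: "w \<in> A - A'"
      then have "w \<noteq> x" "w \<in> A" "w \<in> C" using A'form AC by auto
      then show "act s i w = f i w" unfolding f_def act_def using cw[of w] less.prems(4) by simp
    qed
    have "Pot f s' = Pot f s - Phi (f i) (Dc i C) A + Phi (f i) (Dc i C) A'"
      unfolding s'_def A_def by (rule Pot_upd[OF C])
    then have "Pot f s < Pot f s'" using peq imp by simp
    then have lt: "card {t. Pot f s' < Pot f t} < card {t. Pot f s < Pot f t}" by (rule pot_card_less)
    obtain ps where ps: "improvement_path \<Pi> \<mu> K c v ps" "hd ps = s'" "relNE Fz (last ps)"
      using less.hyps[OF lt[unfolded f_def] prof' cont' stab' x'] by blast
    have "ps \<noteq> []" using ps(1) unfolding impr_iff by simp
    then show ?thesis using impr_cons[OF ps(1) prof] ps stp by (intro exI[of _ "s # ps"]) simp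
  qed
qed

lemma OVL:
  assumes "s \<in> profiles \<Pi> K" "contains Fz s" "stableR Fz R s" "x \<noteq> z"
    "cnt s x + 1 = R x" "cnt s z = R z + 1" "\<forall>w. w \<noteq> x \<longrightarrow> w \<noteq> z \<longrightarrow> cnt s w = R w"
  shows "\<exists>ps. improvement_path \<Pi> \<mu> K c v ps \<and> hd ps = s \<and> relNE Fz (last ps)"
  using assms
proof (induction "card {t. Pot (\<lambda>i w. W i w (R w + 1)) s < Pot (\<lambda>i w. W i w (R w + 1)) t}" arbitrary: s z rule: less_induct)
  case less
  define g where "g = (\<lambda>i w. W i w (R w + 1))"
  define R' where "R' = R(z := R z + 1)"
  note prof = less.prems(1) and cont = less.prems(2) and stab = less.prems(3)
  have cntR': "\<And>w. cnt s w \<le> R' w" unfolding R'_def using less.prems(4-7)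
    by (metis add_leD1 fun_upd_apply order_refl)
  have RR': "\<And>w. R w \<le> R' w" unfolding R'_def by simp
  have R'o: "\<And>w. w \<noteq> z \<Longrightarrow> R' w = R w" unfolding R'_def by simp
  have R'z: "R' z = R z + 1" unfolding R'_def by simp
  show ?case
  proof (cases "stableR Fz R' s")
    case True
    show ?thesis
    proof (rule DEF[OF prof cont True, of x])
      show "\<forall>w. w \<noteq> x \<longrightarrow> cnt s w = R' w" using less.prems(6,7) R'o R'z by metis
      show "cnt s x \<le> R' x" "R' x \<le> cnt s x + 1" using less.prems(4,5) R'o by auto
    qed
  next
    case False
    then obtain i C where C: "C \<in> \<Pi> i" and nlc: "\<not> LC (valR i R' (s i C)) (Fset Fz i C) (s i C) C (K i) (Dc i C)"
      unfolding stableR_def by blast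
    define A where "A = s i C"
    define F where "F = Fset Fz i C"
    define h where "h = valR i R' A"
    have AC: "A \<subseteq> C" and cA: "card A \<le> K i" using prof_sub[OF prof C] unfolding A_def by auto
    have FA: "F \<subseteq> A" using contains_sub[OF cont C] unfolding A_def F_def .
    have finC: "finite C" by simp
    have finA: "finite A" by simp
    have lcR: "LC (valR i R A) F A C (K i) (Dc i C)" using stab C unfolding stableR_def A_def F_def by blast
    have cw: "\<And>w. w \<in> C \<Longrightarrow> cnt s w = oth s i w + (if w \<in> A then 1 else 0)"
      using cnt_C[OF C] unfolding A_def by blast
    have zAF: "z \<in> A \<and> z \<notin> F"
    proof (rule ccontr)
      assume nz: "\<not> (z \<in> A \<and> z \<notin> F)"
      have "LC h F A C (K i) (Dc i C)"
      proof (rule LC_mono[OF lcR])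
        fix w assume w: "w \<in> A - F"
        then have "w \<noteq> z" using nz by auto
        then show "valR i R A w \<le> h w" unfolding h_def valR_def using R'o by simp
      next
        fix w assume w: "w \<in> C - A"
        then show "h w \<le> valR i R A w" unfolding h_def valR_def using RR'[of w] w by (simp add: W_anti)
      qed
      then show False using nlc unfolding h_def A_def F_def by simp
    qed
    have zC: "z \<in> C" using zAF AC by auto
    have lcz: "LC h (insert z F) A C (K i) (Dc i C)"
    proof (rule LC_mono[OF LC_F[OF lcR]])
      show "F \<subseteq> insert z F" by blast
    next
      fix w assume w: "w \<in> A - insert z F"
      then show "valR i R A w \<le> h w" unfolding h_def valR_def using R'o by simp
    next
      fix w assume w: "w \<in> C - A"
      then show "h w \<le> valR i R A w" unfolding h_def valR_def using RR'[of w] w by (simp add: W_anti)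
    qed
    have nlc': "\<not> LC h F A C (K i) (Dc i C)" using nlc unfolding h_def A_def F_def .
    have zA: "z \<in> A" and zF: "z \<notin> F" using zAF by auto
    obtain A' where A'form: "A' = A - {z} \<or> (\<exists>v\<in>C-A. A' = insert v (A - {z}))"
      and imp: "Phi h (Dc i C) A' > Phi h (Dc i C) A"
      and lc': "LC h F A' C (K i) (Dc i C)"
      using E1[OF finC FA AC cA zA zF lcz nlc' dmono_Dc[OF C]] by blast
    have A'C: "A' \<subseteq> C" using A'form AC by auto
    have FA': "F \<subseteq> A'" using A'form FA zAF by auto
    have cA': "card A' \<le> K i"
    proof -
      have c1: "card (A - {z}) \<le> card A" by (rule card_Diff1_le)
      have c2: "card (A - {z}) < card A" by (rule card_Diff1_less[OF finA zA])
      show ?thesis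
      proof (cases "A' = A - {z}")
        case True then show ?thesis using c1 cA by simp
      next
        case False
        then obtain v where v: "v \<in> C - A" "A' = insert v (A - {z})" using A'form by blast
        have "v \<notin> A - {z}" using v(1) by blast
        then have "card A' = Suc (card (A - {z}))" unfolding v(2) by (simp add: finA)
        then show ?thesis using c2 cA by simp
      qed
    qed
    define s' where "s' = upd s i C A'"
    have prof': "s' \<in> profiles \<Pi> K" unfolding s'_def by (rule upd_prof[OF prof C A'C cA'])
    have cont': "contains Fz s'" unfolding s'_def by (rule contains_upd[OF cont C]) (use FA' F_def in simp)
    have imp2: "Phi h (Dc i C) A' - Phi h (Dc i C) A \<le> Phi (act s i) (Dc i C) A' - Phi (act s i) (Dc i C) A"
    proof (rule Phi_diff_le[OF finA])
      fix w assume w: "w \<in> A' - A"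
      then have "w \<in> C" "w \<notin> A" using A'C by auto
      then have "oth s i w \<le> R' w" using cw[of w] cntR'[of w] by simp
      then show "h w \<le> act s i w" unfolding h_def valR_def act_def using \<open>w \<notin> A\<close> by (simp add: W_anti)
    next
      fix w assume w: "w \<in> A - A'"
      then have "w = z" using A'form by auto
      then show "act s i w \<le> h w" unfolding h_def valR_def act_def using cw[of z] zC zAF less.prems(6) R'z by simp
    qed simp
    have stp: "step s s'" unfolding s'_def by (rule step_upd[OF prof C A'C]) (use imp imp2 A_def in simp)
    have stab': "stableR Fz R s'"
      unfolding stableR_def
    proof (intro allI ballI)
      fix j C' assume C': "C' \<in> \<Pi> j"
      show "LC (valR j R (s' j C')) (Fset Fz j C') (s' j C') C' (K j) (Dc j C')"
      proof (cases "(j, C') = (i, C)")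
        case True
        then have jC: "j = i" "C' = C" by auto
        have "LC (valR i R A') F A' C (K i) (Dc i C)"
        proof (rule LC_mono[OF lc'])
          fix w assume w: "w \<in> A' - F"
          have "R w \<le> R' w + (if w \<in> A then 0 else 1)" using RR'[of w] by simp
          then show "h w \<le> valR i R A' w" unfolding valR_def h_def using w by (simp add: W_anti)
        next
          fix w assume w: "w \<in> C - A'"
          have "R' w + (if w \<in> A then 0 else 1) \<le> R w + 1"
            using R'o R'z zAF by (cases "w = z") auto
          then show "valR i R A' w \<le> h w" unfolding valR_def h_def using w by (simp add: W_anti)
        qed
        then show ?thesis using jC unfolding F_def by (simp add: s'_def upd_same)
      next
        case False
        then show ?thesis using stab C' unfolding stableR_def s'_def upd_other[OF False] by auto
      qed
    qed
    have cnt': "\<And>w. cnt s' w = (if w \<in> C then oth s i w + (if w \<in> A' then 1 else 0) else cnt s w)"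
      unfolding s'_def by (rule cnt_upd[OF C])
    have cz': "cnt s' z = R z" using cnt' cw[of z] zC zAF A'form less.prems(6) by auto
    have pot_eq: "Phi (g i) (Dc i C) A' - Phi (g i) (Dc i C) A = Phi h (Dc i C) A' - Phi h (Dc i C) A"
    proof (rule Phi_diff_eq[OF finA])
      fix w assume w: "w \<in> A' - A"
      then have "w \<noteq> z" using zAF by auto
      then show "g i w = h w" unfolding g_def h_def valR_def using w R'o by simp
    next
      fix w assume w: "w \<in> A - A'"
      then have "w = z" using A'form by auto
      then show "h w = g i w" unfolding g_def h_def valR_def using zAF R'z by simp
    qed simp
    have "Pot g s' = Pot g s - Phi (g i) (Dc i C) A + Phi (g i) (Dc i C) A'"
      unfolding s'_def A_def by (rule Pot_upd[OF C])
    then have "Pot g s < Pot g s'" using pot_eq imp by simp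
    then have lt: "card {t. Pot g s' < Pot g t} < card {t. Pot g s < Pot g t}" by (rule pot_card_less)
    have cont_path: "\<exists>ps. improvement_path \<Pi> \<mu> K c v ps \<and> hd ps = s' \<and> relNE Fz (last ps)"
    proof -
      consider (drop) "A' = A - {z}" | (sw) v where "v \<in> C - A" "A' = insert v (A - {z})" using A'form by blast
      then show ?thesis
      proof cases
        case drop
        have same: "\<And>w. w \<noteq> z \<Longrightarrow> cnt s' w = cnt s w" using cnt' cw drop by auto
        show ?thesis
        proof (rule DEF[OF prof' cont' stab', of x])
          show "\<forall>w. w \<noteq> x \<longrightarrow> cnt s' w = R w" using same cz' less.prems(7) by metis
          show "cnt s' x \<le> R x" "R x \<le> cnt s' x + 1" using same[of x] less.prems(4,5) by auto
        qed
      next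
        case (sw v)
        have same: "\<And>w. w \<noteq> z \<Longrightarrow> w \<noteq> v \<Longrightarrow> cnt s' w = cnt s w" using cnt' cw sw by auto
        have cv: "cnt s' v = cnt s v + 1" using cnt' cw[of v] sw by auto
        show ?thesis
        proof (cases "v = x")
          case True
          show ?thesis
          proof (rule DEF[OF prof' cont' stab', of x])
            show "\<forall>w. w \<noteq> x \<longrightarrow> cnt s' w = R w" using same cz' less.prems(7) True by metis
            show "cnt s' x \<le> R x" "R x \<le> cnt s' x + 1" using cv True less.prems(5) by auto
          qed
        next
          case False
          have vz: "v \<noteq> z" using sw zAF by auto
          show ?thesis
          proof (rule less.hyps[OF lt[unfolded g_def] prof' cont' stab'])
            show "x \<noteq> v" using False by simp
            show "cnt s' x + 1 = R x" using same[of x] less.prems(4,5) False by simp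
            show "cnt s' v = R v + 1" using cv less.prems(7) False vz by simp
            show "\<forall>w. w \<noteq> x \<longrightarrow> w \<noteq> v \<longrightarrow> cnt s' w = R w" using same cz' less.prems(7) by metis
          qed
        qed
      qed
    qed
    then obtain ps where ps: "improvement_path \<Pi> \<mu> K c v ps" "hd ps = s'" "relNE Fz (last ps)" by blast
    have "ps \<noteq> []" using ps(1) unfolding impr_iff by simp
    then show ?thesis using impr_cons[OF ps(1) prof] ps stp by (intro exI[of _ "s # ps"]) simp
  qed
qed

end



context sg begin

lemma Fset_insert:
  assumes "C \<in> \<Pi> j" "C0 \<in> \<Pi> a" "x \<in> C0"
  shows "Fset (insert (a, x) Fz) j C = (if (j, C) = (a, C0) then insert x (Fset Fz j C) else Fset Fz j C)"
proof (cases "(j, C) = (a, C0)")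
  case True then show ?thesis using assms unfolding Fset_def by auto
next
  case False
  have "\<not> (j = a \<and> x \<in> C)"
  proof
    assume "j = a \<and> x \<in> C"
    then have "C = C0" using cells_disj assms by blast
    then show False using False \<open>j = a \<and> x \<in> C\<close> by simp
  qed
  then show ?thesis using False unfolding Fset_def by auto
qed

lemma MAIN:
  "\<forall>s. s \<in> profiles \<Pi> K \<longrightarrow> contains Fz s \<longrightarrow>
     (\<exists>ps. improvement_path \<Pi> \<mu> K c v ps \<and> hd ps = s \<and> relNE Fz (last ps))"
proof (induction "card (UNIV - Fz)" arbitrary: Fz rule: less_induct)
  case less
  have caseA: "\<exists>ps. improvement_path \<Pi> \<mu> K c v ps \<and> hd ps = s \<and> relNE Fz (last ps)"
    if prof: "s \<in> profiles \<Pi> K" and cont: "contains Fz s"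
      and tok: "\<exists>a x. x \<in> s a (cell (\<Pi> a) x) \<and> (a, x) \<notin> Fz" for s
  proof -
    obtain a x where xs: "x \<in> s a (cell (\<Pi> a) x)" and axF: "(a, x) \<notin> Fz" using tok by blast
    define C0 where "C0 = cell (\<Pi> a) x"
    have C0: "C0 \<in> \<Pi> a" "x \<in> C0" unfolding C0_def using cell_props by auto
    define Fz' where "Fz' = insert (a, x) Fz"
    have lt: "card (UNIV - Fz') < card (UNIV - Fz)"
    proof -
      have "UNIV - Fz' = (UNIV - Fz) - {(a, x)}" unfolding Fz'_def by blast
      moreover have "(a, x) \<in> UNIV - Fz" using axF by simp
      ultimately show ?thesis using card_Diff1_less[of "UNIV - Fz" "(a, x)"] by simp
    qed
    have cont0: "contains Fz' s" using cont xs unfolding contains_def Fz'_def by auto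
    obtain ps1 where ps1: "improvement_path \<Pi> \<mu> K c v ps1" "hd ps1 = s" "relNE Fz' (last ps1)"
      using less.hyps[OF lt] prof cont0 by blast
    define t where "t = last ps1"
    have ps1ne: "ps1 \<noteq> []" using ps1(1) unfolding impr_iff by simp
    show ?thesis
    proof (cases "relNE Fz t")
      case True then show ?thesis using ps1 unfolding t_def by blast
    next
      case False
      have proft: "t \<in> profiles \<Pi> K" using ps1(3) unfolding relNE_def t_def by simp
      have contt': "contains Fz' t" using ps1(3) unfolding relNE_def t_def by simp
      have contt: "contains Fz t" using contt' unfolding contains_def Fz'_def by simp
      have lcs: "\<And>j C. C \<in> \<Pi> j \<Longrightarrow> LC (act t j) (Fset Fz' j C) (t j C) C (K j) (Dc j C)"
        using ps1(3) unfolding relNE_def t_def by blast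
      have FsE: "\<And>j C. C \<in> \<Pi> j \<Longrightarrow> Fset Fz' j C = (if (j, C) = (a, C0) then insert x (Fset Fz j C) else Fset Fz j C)"
        unfolding Fz'_def using Fset_insert C0 by blast
      have nlc: "\<not> LC (act t a) (Fset Fz a C0) (t a C0) C0 (K a) (Dc a C0)"
      proof
        assume lc0: "LC (act t a) (Fset Fz a C0) (t a C0) C0 (K a) (Dc a C0)"
        have "relNE Fz t" unfolding relNE_def
        proof (intro conjI allI ballI proft contt)
          fix j C assume C: "C \<in> \<Pi> j"
          show "LC (act t j) (Fset Fz j C) (t j C) C (K j) (Dc j C)"
          proof (cases "(j, C) = (a, C0)")
            case True then show ?thesis using lc0 by auto
          next
            case False
            then have "Fset Fz' j C = Fset Fz j C" using FsE[OF C] by auto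
            then show ?thesis using lcs[OF C] by simp
          qed
        qed
        then show False using False by simp
      qed
      define A where "A = t a C0"
      define F where "F = Fset Fz a C0"
      have AC: "A \<subseteq> C0" and cA: "card A \<le> K a" using prof_sub[OF proft C0(1)] unfolding A_def by auto
      have FA: "F \<subseteq> A" using contains_sub[OF contt C0(1)] unfolding A_def F_def .
      have finC: "finite C0" by simp
      have finA: "finite A" by simp
      have xA: "x \<in> A" using contt' unfolding contains_def Fz'_def A_def C0_def by auto
      have xF: "x \<notin> F" using axF unfolding F_def Fset_def by simp
      have lcx: "LC (act t a) (insert x F) A C0 (K a) (Dc a C0)"
        using lcs[OF C0(1)] FsE[OF C0(1)] unfolding A_def F_def by simp
      have nlc': "\<not> LC (act t a) F A C0 (K a) (Dc a C0)" using nlc unfolding A_def F_def .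
      obtain A' where A'form: "A' = A - {x} \<or> (\<exists>v\<in>C0-A. A' = insert v (A - {x}))"
        and imp: "Phi (act t a) (Dc a C0) A' > Phi (act t a) (Dc a C0) A"
        and lc': "LC (act t a) F A' C0 (K a) (Dc a C0)"
        using E1[OF finC FA AC cA xA xF lcx nlc' dmono_Dc[OF C0(1)]] by blast
      have A'C: "A' \<subseteq> C0" using A'form AC by auto
      have FA': "F \<subseteq> A'" using A'form FA xF by auto
      have cA': "card A' \<le> K a"
      proof -
        have c1: "card (A - {x}) \<le> card A" by (rule card_Diff1_le)
        have c2: "card (A - {x}) < card A" by (rule card_Diff1_less[OF finA xA])
        show ?thesis
        proof (cases "A' = A - {x}")
          case True then show ?thesis using c1 cA by simp
        next
          case False
          then obtain v where v: "v \<in> C0 - A" "A' = insert v (A - {x})" using A'form by blast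
          have "v \<notin> A - {x}" using v(1) by blast
          then have "card A' = Suc (card (A - {x}))" unfolding v(2) by (simp add: finA)
          then show ?thesis using c2 cA by simp
        qed
      qed
      define R where "R = cnt t"
      define s' where "s' = upd t a C0 A'"
      have prof': "s' \<in> profiles \<Pi> K" unfolding s'_def by (rule upd_prof[OF proft C0(1) A'C cA'])
      have cont': "contains Fz s'" unfolding s'_def by (rule contains_upd[OF contt C0(1)]) (use FA' F_def in simp)
      have stp: "step t s'" unfolding s'_def by (rule step_upd[OF proft C0(1) A'C]) (use imp A_def in simp)
      have cw: "\<And>w. w \<in> C0 \<Longrightarrow> cnt t w = oth t a w + (if w \<in> A then 1 else 0)"
        using cnt_C[OF C0(1)] unfolding A_def by blast
      have stab': "stableR Fz R s'"
        unfolding stableR_def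
      proof (intro allI ballI)
        fix j C assume C: "C \<in> \<Pi> j"
        show "LC (valR j R (s' j C)) (Fset Fz j C) (s' j C) C (K j) (Dc j C)"
        proof (cases "(j, C) = (a, C0)")
          case True
          then have jC: "j = a" "C = C0" by auto
          have "LC (valR a R A') F A' C0 (K a) (Dc a C0)"
          proof (rule LC_mono[OF lc'])
            fix w assume w: "w \<in> A' - F"
            then have "R w \<le> oth t a w + 1" unfolding R_def using cw[of w] A'C by auto
            then show "act t a w \<le> valR a R A' w" unfolding valR_def act_def using w by (simp add: W_anti)
          next
            fix w assume w: "w \<in> C0 - A'"
            then have "oth t a w \<le> R w" unfolding R_def using cw[of w] by auto
            then show "valR a R A' w \<le> act t a w" unfolding valR_def act_def using w by (simp add: W_anti)
          qed
          then show ?thesis using jC unfolding F_def by (simp add: s'_def upd_same)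
        next
          case False
          have ev: "\<And>w. w \<in> C \<Longrightarrow> valR j R (t j C) w = act t j w" unfolding R_def by (rule act_valR[OF C])
          have "Fset Fz' j C = Fset Fz j C" using FsE[OF C] False by auto
          then have "LC (act t j) (Fset Fz j C) (t j C) C (K j) (Dc j C)" using lcs[OF C] by simp
          then have "LC (valR j R (t j C)) (Fset Fz j C) (t j C) C (K j) (Dc j C)"
            by (rule LC_mono) (use ev prof_sub[OF proft C] in auto)
          then show ?thesis unfolding s'_def upd_other[OF False] .
        qed
      qed
      have cnt': "\<And>w. cnt s' w = (if w \<in> C0 then oth t a w + (if w \<in> A' then 1 else 0) else cnt t w)"
        unfolding s'_def by (rule cnt_upd[OF C0(1)])
      have cx': "cnt s' x + 1 = R x" using cnt' cw[of x] C0 xA A'form unfolding R_def by auto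
      have ps2: "\<exists>ps. improvement_path \<Pi> \<mu> K c v ps \<and> hd ps = s' \<and> relNE Fz (last ps)"
      proof -
        consider (drop) "A' = A - {x}" | (sw) v where "v \<in> C0 - A" "A' = insert v (A - {x})" using A'form by blast
        then show ?thesis
        proof cases
          case drop
          have same: "\<And>w. w \<noteq> x \<Longrightarrow> cnt s' w = R w" using cnt' cw drop unfolding R_def by auto
          show ?thesis
          proof (rule DEF[OF prof' cont' stab', of x])
            show "\<forall>w. w \<noteq> x \<longrightarrow> cnt s' w = R w" using same by blast
            show "cnt s' x \<le> R x" "R x \<le> cnt s' x + 1" using cx' by auto
          qed
        next
          case (sw v)
          have same: "\<And>w. w \<noteq> x \<Longrightarrow> w \<noteq> v \<Longrightarrow> cnt s' w = R w" using cnt' cw sw unfolding R_def by auto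
          have cv: "cnt s' v = R v + 1" using cnt' cw[of v] sw unfolding R_def by auto
          have vx: "x \<noteq> v" using sw xA by auto
          show ?thesis
            by (rule OVL[OF prof' cont' stab' vx cx' cv]) (use same in blast)
        qed
      qed
      then obtain ps2 where ps2: "improvement_path \<Pi> \<mu> K c v ps2" "hd ps2 = s'" "relNE Fz (last ps2)" by blast
      have ps2ne: "ps2 \<noteq> []" using ps2(1) unfolding impr_iff by simp
      have "improvement_path \<Pi> \<mu> K c v (ps1 @ ps2)"
        by (rule impr_append[OF ps1(1) ps2(1)]) (use stp ps2(2) t_def in simp)
      moreover have "hd (ps1 @ ps2) = s" using ps1ne ps1(2) by simp
      moreover have "last (ps1 @ ps2) = last ps2" using ps2ne by simp
      ultimately show ?thesis using ps2(3) by metis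
    qed
  qed
  show ?case
  proof (intro allI impI)
    fix s assume prof: "s \<in> profiles \<Pi> K" and cont: "contains Fz s"
    show "\<exists>ps. improvement_path \<Pi> \<mu> K c v ps \<and> hd ps = s \<and> relNE Fz (last ps)"
    proof (cases "\<exists>a x. x \<in> s a (cell (\<Pi> a) x) \<and> (a, x) \<notin> Fz")
      case True then show ?thesis using caseA prof cont by blast
    next
      case nt: False
      show ?thesis
      proof (cases "relNE Fz s")
        case True
        then show ?thesis using impr_single[OF prof] by (intro exI[of _ "[s]"]) simp
      next
        case False
        then obtain i C where C: "C \<in> \<Pi> i" and nlc: "\<not> LC (act s i) (Fset Fz i C) (s i C) C (K i) (Dc i C)"
          unfolding relNE_def using prof cont by blast
        define A where "A = s i C"
        define F where "F = Fset Fz i C"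
        have AC: "A \<subseteq> C" and cA: "card A \<le> K i" using prof_sub[OF prof C] unfolding A_def by auto
        have FA: "F \<subseteq> A" using contains_sub[OF cont C] unfolding A_def F_def .
        have AF: "A \<subseteq> F"
        proof
          fix w assume w: "w \<in> A"
          then have "cell (\<Pi> i) w = C" using AC C cell_eq by blast
          then have "(i, w) \<in> Fz" using nt w unfolding A_def by auto
          then show "w \<in> F" using w AC unfolding F_def Fset_def by auto
        qed
        have "\<not> (card A < K i \<longrightarrow> (\<forall>w\<in>C-A. act s i w \<le> Dc i C (card A + 1) - Dc i C (card A)))"
          using nlc AF unfolding LC_def A_def F_def by auto
        then obtain w where kK: "card A < K i" and w: "w \<in> C" "w \<notin> A"
          and gw: "act s i w > Dc i C (card A + 1) - Dc i C (card A)" by auto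
        define X where "X = insert w A"
        have XC: "X \<subseteq> C" using w AC unfolding X_def by auto
        have cX: "card X \<le> K i" unfolding X_def using kK w by simp
        have "Phi (act s i) (Dc i C) X > Phi (act s i) (Dc i C) A"
          unfolding Phi_def X_def using w gw by simp
        then have stp: "step s (upd s i C X)" by (intro step_upd[OF prof C XC]) (simp add: A_def)
        have prof': "upd s i C X \<in> profiles \<Pi> K" by (rule upd_prof[OF prof C XC cX])
        have cont': "contains Fz (upd s i C X)"
          by (rule contains_upd[OF cont C]) (use FA F_def X_def in auto)
        have tok: "\<exists>a x. x \<in> upd s i C X a (cell (\<Pi> a) x) \<and> (a, x) \<notin> Fz"
        proof (intro exI conjI)
          show "w \<in> upd s i C X i (cell (\<Pi> i) w)" using cell_eq[OF C w(1)] by (simp add: upd_same X_def)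
          show "(i, w) \<notin> Fz" using w FA unfolding F_def Fset_def by auto
        qed
        obtain ps where ps: "improvement_path \<Pi> \<mu> K c v ps" "hd ps = upd s i C X" "relNE Fz (last ps)"
          using caseA[OF prof' cont' tok] by blast
        have "ps \<noteq> []" using ps(1) unfolding impr_iff by simp
        then show ?thesis using impr_cons[OF ps(1) prof] ps stp by (intro exI[of _ "s # ps"]) simp
      qed
    qed
  qed
qed

lemma relNE_nash:
  assumes "relNE {} s"
  shows "is_nash \<Pi> \<mu> K c v s"
  unfolding is_nash_def
proof (intro conjI allI ballI)
  show prof: "s \<in> profiles \<Pi> K" using assms unfolding relNE_def by simp
  fix i \<sigma> assume \<sigma>: "\<sigma> \<in> strategies \<Pi> K i"
  have sub: "\<And>C. C \<in> \<Pi> i \<Longrightarrow> \<sigma> C \<subseteq> C \<and> card (\<sigma> C) \<le> K i" using \<sigma> unfolding strategies_def by blast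
  have "payoff \<Pi> \<mu> c v (s(i := \<sigma>)) i = (\<Sum>C\<in>\<Pi> i. Phi (act s i) (Dc i C) (\<sigma> C))"
    using payoff_decomp sub by blast
  also have "\<dots> \<le> (\<Sum>C\<in>\<Pi> i. Phi (act s i) (Dc i C) (s i C))"
  proof (rule sum_mono)
    fix C assume C: "C \<in> \<Pi> i"
    have lc: "LC (act s i) {} (s i C) C (K i) (Dc i C)"
      using assms C unfolding relNE_def Fset_def by simp
    show "Phi (act s i) (Dc i C) (\<sigma> C) \<le> Phi (act s i) (Dc i C) (s i C)"
      by (rule LG[OF _ _ _ _ lc dmono_Dc[OF C]]) (use prof_sub[OF prof C] sub[OF C] in auto)
  qed
  also have "\<dots> = payoff \<Pi> \<mu> c v s i" using payoff_self[OF prof] by simp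
  finally show "payoff \<Pi> \<mu> c v (s(i := \<sigma>)) i \<le> payoff \<Pi> \<mu> c v s i" .
qed

end

theorem proposition1:
  fixes \<Pi> :: "'i::finite \<Rightarrow> 'w::finite set set"
    and \<mu> :: "'w \<Rightarrow> real" and K :: "'i \<Rightarrow> nat" and c :: "'i \<Rightarrow> nat \<Rightarrow> real"
    and v :: "'i \<Rightarrow> nat \<Rightarrow> 'w \<Rightarrow> real" and vs :: "'w \<Rightarrow> real"
    and s1 :: "'i \<Rightarrow> 'w set \<Rightarrow> 'w set"
  assumes "search_game \<Pi> \<mu> K c v vs"
    and "s1 \<in> profiles \<Pi> K"
  shows "\<exists>ps. improvement_path \<Pi> \<mu> K c v ps \<and> hd ps = s1 \<and> is_nash \<Pi> \<mu> K c v (last ps)"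
proof -
  interpret sg \<Pi> \<mu> K c v vs by unfold_locales (rule assms(1))
  have "contains {} s1" unfolding contains_def by simp
  then obtain ps where "improvement_path \<Pi> \<mu> K c v ps" "hd ps = s1" "relNE {} (last ps)"
    using MAIN[of "{}"] assms(2) by blast
  then show ?thesis using relNE_nash by blast
qed


end
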